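(* (a) The cell $S_{z_1,z_1}$ is the disjoint union of exactly three $G$-orbits of points $(P,Pz_1,Pz_1n)$: $n=n(1,0,0)$, dimension $7$, stabilizer $\{d(a,a,1/a^2):a\in\mathbb{R}^\times\}$; $n=n(0,1,0)$, dimension $6$, stabilizer $\left\{\begin{pmatrix}a&0&0\\0&1/a^2&x\\0&0&a\end{pmatrix}:a\in\mathbb{R}^\times,x\in\mathbb{R}\right\}$; $n=n(0,0,0)$, dimension $5$, stabilizer $D\cdot\{n(0,0,x):x\in\mathbb{R}\}$. (b) The cell $S_{z_1,z_2}$ is the disjoint union of exactly two $G$-orbits of points $(P,Pz_1,Pz_2n)$: $n=n(0,1,0)$, dimension $7$, stabilizer $\{d(a,1/a^2,a):a\in\mathbb{R}^\times\}$; $n=n(0,0,0)$, dimension $6$, stabilizer $D$. (c) The cell $S_{z_1,s_1}$ is the disjoint union of exactly two $G$-orbits of points $(P,Pz_1,Ps_1n)$: $n=n(1,0,0)$, dimension $6$, stabilizer $\left\{\begin{pmatrix}a&0&0\\0&a&x\\0&0&1/a^2\end{pmatrix}:a\in\mathbb{R}^\times,x\in\mathbb{R}\right\}$; $n=n(0,0,0)$, dimension $5$, stabilizer $D\cdot\{n(0,0,x):x\in\mathbb{R}\}$. (d) The cell $S_{z_1,s_2}$ is a single $G$-orbit, that of $(P,Pz_1,Ps_2)$, of dimension $6$ with stabilizer $D$. (e) The cell $S_{z_1,1}$ is a single $G$-orbit, that of $(P,Pz_1,P)$, of dimension $5$ with stabilizer $D\cdot\{n(0,0,x):x\in\mathb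b{R}\}$.
   Context: $G=\mathrm{SL}_3(\mathbb{R})$, $P$ the upper triangular matrices in $G$, $D$ the diagonal matrices in $G$; $G$ acts on $X=(P\backslash G)^3$ by right multiplication in each coordinate. $n(x,y,z)=\begin{pmatrix}1&x&y\\0&1&z\\0&0&1\end{pmatrix}$, $d(a,b,c)=\operatorname{diag}(a,b,c)$. $1$ is the identity matrix, $s_1=\begin{pmatrix}0&1&0\\1&0&0\\0&0&-1\end{pmatrix}$, $s_2=\begin{pmatrix}-1&0&0\\0&0&1\\0&1&0\end{pmatrix}$, $z_1=\begin{pmatrix}0&-1&0\\0&0&-1\\1&0&0\end{pmatrix}$, $z_2=\begin{pmatrix}0&0&1\\-1&0&0\\0&-1&0\end{pmatrix}$. $S_{v,w}=\big(\{P\}\times P\backslash PvP\times P\backslash PwP\big)\cdot G$. The stabilizer of $(P,Pv,Pwn)$ is $P\cap v^{-1}Pv\cap (wn)^{-1}P(wn)$. *)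

theory Defs
  imports "HOL-Analysis.Analysis"
begin

type_synonym m3 = "real^3^3"

definition mat3 :: "real \<Rightarrow> real \<Rightarrow> real \<Rightarrow> real \<Rightarrow> real \<Rightarrow> real \<Rightarrow> real \<Rightarrow> real \<Rightarrow> real \<Rightarrow> m3" where
  "mat3 a11 a12 a13 a21 a22 a23 a31 a32 a33 =
     vector [vector [a11, a12, a13], vector [a21, a22, a23], vector [a31, a32, a33]]"

definition SL3 :: "m3 set" where
  "SL3 = {A. det A = 1}"

definition Pgrp :: "m3 set" where
  "Pgrp = {mat3 a x y 0 b z 0 0 c | a b c x y z. a * b * c = 1}"

definition dmat :: "real \<Rightarrow> real \<Rightarrow> real \<Rightarrow> m3" where
  "dmat a b c = mat3 a 0 0 0 b 0 0 0 c"

definition nmat :: "real \<Rightarrow> real \<Rightarrow> real \<Rightarrow> m3" where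
  "nmat x y z = mat3 1 x y 0 1 z 0 0 1"

definition Dgrp :: "m3 set" where
  "Dgrp = {dmat a b c | a b c. a * b * c = 1}"

definition s1 :: m3 where "s1 = mat3 0 1 0 1 0 0 0 0 (-1)"
definition s2 :: m3 where "s2 = mat3 (-1) 0 0 0 0 1 0 1 0"
definition z1 :: m3 where "z1 = mat3 0 (-1) 0 0 0 (-1) 1 0 0"
definition z2 :: m3 where "z2 = mat3 0 0 1 (-1) 0 0 0 (-1) 0"

definition setmul :: "m3 set \<Rightarrow> m3 set \<Rightarrow> m3 set" where
  "setmul A B = {a ** b | a b. a \<in> A \<and> b \<in> B}"

text \<open>The right coset P g, i.e. a point of P\textbackslash G.\<close>
definition Pcoset :: "m3 \<Rightarrow> m3 set" where
  "Pcoset g = {p ** g | p. p \<in> Pgrp}"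

type_synonym pt = "m3 set \<times> m3 set \<times> m3 set"

definition ract :: "m3 set \<Rightarrow> m3 \<Rightarrow> m3 set" where
  "ract S g = (\<lambda>h. h ** g) ` S"

definition act :: "pt \<Rightarrow> m3 \<Rightarrow> pt" where
  "act x g = (case x of (u, v, w) \<Rightarrow> (ract u g, ract v g, ract w g))"

definition orbit :: "pt \<Rightarrow> pt set" where
  "orbit x = {act x g | g. g \<in> SL3}"

definition stab :: "pt \<Rightarrow> m3 set" where
  "stab x = {g \<in> SL3. act x g = x}"

text \<open>P\textbackslash PvP, as a set of points of P\textbackslash G.\<close>
definition PvP_cosets :: "m3 \<Rightarrow> m3 set set" where
  "PvP_cosets v = {Pcoset q | q. q \<in> setmul (setmul Pgrp {v}) Pgrp}"

text \<open>The cell S_{v,w} = ({P} x P\textbackslash PvP x P\textbackslash PwP) . G.\<close>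
definition cell :: "m3 \<Rightarrow> m3 \<Rightarrow> pt set" where
  "cell v w = {act (Pcoset (mat 1), a, b) g | a b g.
                 a \<in> PvP_cosets v \<and> b \<in> PvP_cosets w \<and> g \<in> SL3}"

definition lie_alg :: "m3 set \<Rightarrow> m3 set" where
  "lie_alg H = {X. \<exists>\<gamma>::real \<Rightarrow> m3. \<gamma> 0 = mat 1 \<and> (\<forall>t. \<gamma> t \<in> H)
                      \<and> (\<gamma> has_vector_derivative X) (at 0)}"

definition lie_dim :: "m3 set \<Rightarrow> nat" where
  "lie_dim H = dim (lie_alg H)"

text \<open>Dimension of the orbit G.x, the homogeneous space G / Stab(x):
  dim G - dim Stab(x).\<close>
definition orbit_dim :: "pt \<Rightarrow> nat" where
  "orbit_dim x = lie_dim SL3 - lie_dim (stab x)"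

definition base :: "m3 \<Rightarrow> m3 \<Rightarrow> m3 \<Rightarrow> pt" where
  "base v w n = (Pcoset (mat 1), Pcoset v, Pcoset (w ** n))"

end

theory Submission
  imports Defs
begin


lemma mat3_nth:
  "mat3 a11 a12 a13 a21 a22 a23 a31 a32 a33 $ 1 $ 1 = a11"
  "mat3 a11 a12 a13 a21 a22 a23 a31 a32 a33 $ 1 $ 2 = a12"
  "mat3 a11 a12 a13 a21 a22 a23 a31 a32 a33 $ 1 $ 3 = a13"
  "mat3 a11 a12 a13 a21 a22 a23 a31 a32 a33 $ 2 $ 1 = a21"
  "mat3 a11 a12 a13 a21 a22 a23 a31 a32 a33 $ 2 $ 2 = a22"
  "mat3 a11 a12 a13 a21 a22 a23 a31 a32 a33 $ 2 $ 3 = a23"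
  "mat3 a11 a12 a13 a21 a22 a23 a31 a32 a33 $ 3 $ 1 = a31"
  "mat3 a11 a12 a13 a21 a22 a23 a31 a32 a33 $ 3 $ 2 = a32"
  "mat3 a11 a12 a13 a21 a22 a23 a31 a32 a33 $ 3 $ 3 = a33"
  by (simp_all add: mat3_def)



lemma m3_eq_iff: "(A::m3) = B \<longleftrightarrow> (\<forall>i j. A$i$j = B$i$j)"
  by (simp add: vec_eq_iff)

lemma mat3_eq:
  "mat3 a11 a12 a13 a21 a22 a23 a31 a32 a33 = mat3 b11 b12 b13 b21 b22 b23 b31 b32 b33 \<longleftrightarrow>
   a11 = b11 \<and> a12 = b12 \<and> a13 = b13 \<and> a21 = b21 \<and> a22 = b22 \<and> a23 = b23 \<and> a31 = b31 \<and> a32 = b32 \<and> a33 = b33"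
  by (simp add: m3_eq_iff forall_3 mat3_nth)

lemma m3_eta: "(A::m3) = mat3 (A$1$1) (A$1$2) (A$1$3) (A$2$1) (A$2$2) (A$2$3) (A$3$1) (A$3$2) (A$3$3)"
  by (simp add: m3_eq_iff forall_3 mat3_nth)

lemma mat3_mult:
  "mat3 a11 a12 a13 a21 a22 a23 a31 a32 a33 ** mat3 b11 b12 b13 b21 b22 b23 b31 b32 b33 =
   mat3 (a11*b11+a12*b21+a13*b31) (a11*b12+a12*b22+a13*b32) (a11*b13+a12*b23+a13*b33)
        (a21*b11+a22*b21+a23*b31) (a21*b12+a22*b22+a23*b32) (a21*b13+a22*b23+a23*b33)
        (a31*b11+a32*b21+a33*b31) (a31*b12+a32*b22+a33*b32) (a31*b13+a32*b23+a33*b33)"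
  by (simp add: m3_eq_iff forall_3 mat3_nth matrix_matrix_mult_def sum_3)

lemma mat1_mat3: "(mat 1 :: m3) = mat3 1 0 0 0 1 0 0 0 1"
  by (simp add: m3_eq_iff forall_3 mat3_nth mat_def)

lemma det_mat3: "det (mat3 a11 a12 a13 a21 a22 a23 a31 a32 a33) =
   a11*a22*a33 + a12*a23*a31 + a13*a21*a32 - a11*a23*a32 - a12*a21*a33 - a13*a22*a31"
  by (simp add: det_3 mat3_nth)

lemma mat3_add: "mat3 a11 a12 a13 a21 a22 a23 a31 a32 a33 + mat3 b11 b12 b13 b21 b22 b23 b31 b32 b33 =
   mat3 (a11+b11) (a12+b12) (a13+b13) (a21+b21) (a22+b22) (a23+b23) (a31+b31) (a32+b32) (a33+b33)"
  by (simp add: m3_eq_iff forall_3 mat3_nth)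

lemma mat3_scale: "c *\<^sub>R mat3 a11 a12 a13 a21 a22 a23 a31 a32 a33 =
   mat3 (c*a11) (c*a12) (c*a13) (c*a21) (c*a22) (c*a23) (c*a31) (c*a32) (c*a33)"
  by (simp add: m3_eq_iff forall_3 mat3_nth)

lemma mat3_zero: "(0::m3) = mat3 0 0 0 0 0 0 0 0 0"
  by (simp add: m3_eq_iff forall_3 mat3_nth)


lemma Pgrp_mat3: "mat3 a x y d b z e f c \<in> Pgrp \<longleftrightarrow> d = 0 \<and> e = 0 \<and> f = 0 \<and> a*b*c = 1"
  unfolding Pgrp_def by (auto simp: mat3_eq)

lemma PgrpE:
  assumes "p \<in> Pgrp"
  obtains a x y b z c where "p = mat3 a x y 0 b z 0 0 c" "a*b*c = 1"
  using assms unfolding Pgrp_def by auto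

definition pinv :: "m3 \<Rightarrow> m3" where
  "pinv M = (let a = M$1$1; x = M$1$2; y = M$1$3; b = M$2$2; z = M$2$3; c = M$3$3 in
     mat3 (1/a) (-x/(a*b)) ((x*z - b*y)/(a*b*c)) 0 (1/b) (-z/(b*c)) 0 0 (1/c))"

lemma P_one: "mat 1 \<in> Pgrp"
  by (simp add: mat1_mat3 Pgrp_mat3)

lemma P_mult: "p \<in> Pgrp \<Longrightarrow> q \<in> Pgrp \<Longrightarrow> p ** q \<in> Pgrp"
  by (elim PgrpE) (simp add: mat3_mult Pgrp_mat3 algebra_simps)

lemma P_pinv:
  assumes "p \<in> Pgrp"
  shows "pinv p \<in> Pgrp" "p ** pinv p = mat 1" "pinv p ** p = mat 1"
proof -
  obtain a x y b z c where p: "p = mat3 a x y 0 b z 0 0 c" "a*b*c = 1"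
    using assms by (rule PgrpE)
  then have nz: "a \<noteq> 0" "b \<noteq> 0" "c \<noteq> 0" by auto
  have cc: "c = 1/(a*b)" using p nz by (simp add: field_simps)
  show "pinv p \<in> Pgrp" using p nz
    by (simp add: pinv_def mat3_nth Pgrp_mat3 field_simps)
  show "p ** pinv p = mat 1" using p nz cc
    by (simp add: pinv_def mat3_nth mat3_mult mat1_mat3 mat3_eq field_simps)
  show "pinv p ** p = mat 1" using p nz cc
    by (simp add: pinv_def mat3_nth mat3_mult mat1_mat3 mat3_eq field_simps)
qed

lemma P_SL3: "p \<in> Pgrp \<Longrightarrow> p \<in> SL3"
  by (elim PgrpE) (simp add: SL3_def det_mat3)

lemma Pcoset_mult: "p \<in> Pgrp \<Longrightarrow> Pcoset (p ** A) = Pcoset A"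
proof -
  assume p: "p \<in> Pgrp"
  show ?thesis
  proof
    show "Pcoset (p ** A) \<subseteq> Pcoset A"
      unfolding Pcoset_def using p by (auto simp: matrix_mul_assoc intro!: P_mult)
    show "Pcoset A \<subseteq> Pcoset (p ** A)"
    proof
      fix M assume "M \<in> Pcoset A"
      then obtain q where q: "q \<in> Pgrp" "M = q ** A" unfolding Pcoset_def by auto
      have "M = (q ** pinv p) ** (p ** A)"
        using q P_pinv[OF p] by (simp add: matrix_mul_assoc[symmetric] matrix_mul_assoc)
      moreover have "q ** pinv p \<in> Pgrp" using q P_pinv[OF p] P_mult by auto
      ultimately show "M \<in> Pcoset (p ** A)" unfolding Pcoset_def by auto
    qed
  qed
qed

lemma Pcoset_self: "A \<in> Pcoset A"
  unfolding Pcoset_def using P_one by force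

lemma Pcoset_eqD: "Pcoset A = Pcoset B \<Longrightarrow> \<exists>p\<in>Pgrp. A = p ** B"
  using Pcoset_self[of A] unfolding Pcoset_def by auto

lemma ract_Pcoset: "ract (Pcoset A) g = Pcoset (A ** g)"
  unfolding ract_def Pcoset_def by (auto simp: matrix_mul_assoc image_iff)

lemma act_coset: "act (Pcoset A, Pcoset B, Pcoset C) g = (Pcoset (A ** g), Pcoset (B ** g), Pcoset (C ** g))"
  by (simp add: act_def ract_Pcoset)

lemma SL3_cancel:
  assumes "h \<in> SL3" "A ** h = B ** h"
  shows "A = B"
proof -
  have "invertible h" using assms(1) by (simp add: SL3_def invertible_det_nz)
  then obtain h' where "h ** h' = mat 1" unfolding invertible_def by auto
  then have "A = (A ** h) ** h'" "B = (B ** h) ** h'" by (simp_all add: matrix_mul_assoc[symmetric])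
  then show ?thesis using assms(2) by simp
qed

lemma PvP_cosets_eq: "PvP_cosets v = {Pcoset (v ** p) | p. p \<in> Pgrp}"
  unfolding PvP_cosets_def setmul_def
  by (auto simp: matrix_mul_assoc[symmetric] Pcoset_mult) (metis P_one matrix_mul_lid)

lemma cell_eq: "cell v w = {(Pcoset g, Pcoset (v ** p ** g), Pcoset (w ** p' ** g)) | p p' g. p \<in> Pgrp \<and> p' \<in> Pgrp \<and> g \<in> SL3}"
proof (intro set_eqI iffI)
  fix X assume "X \<in> cell v w"
  then obtain p p' g where "p \<in> Pgrp" "p' \<in> Pgrp" "g \<in> SL3"
    "X = act (Pcoset (mat 1), Pcoset (v ** p), Pcoset (w ** p')) g"
    unfolding cell_def PvP_cosets_eq by auto
  then show "X \<in> {(Pcoset g, Pcoset (v ** p ** g), Pcoset (w ** p' ** g)) | p p' g. p \<in> Pgrp \<and> p' \<in> Pgrp \<and> g \<in> SL3}"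
    by (simp add: act_coset matrix_mul_assoc) blast
next
  fix X assume "X \<in> {(Pcoset g, Pcoset (v ** p ** g), Pcoset (w ** p' ** g)) | p p' g. p \<in> Pgrp \<and> p' \<in> Pgrp \<and> g \<in> SL3}"
  then obtain p p' g where *: "p \<in> Pgrp" "p' \<in> Pgrp" "g \<in> SL3"
    "X = act (Pcoset (mat 1), Pcoset (v ** p), Pcoset (w ** p')) g"
    by (auto simp: act_coset matrix_mul_assoc)
  then show "X \<in> cell v w" unfolding cell_def PvP_cosets_eq by blast
qed

lemma orbit_base: "orbit (base v w n) = {(Pcoset g, Pcoset (v ** g), Pcoset (w ** n**g)) | g. g \<in> SL3}"
  unfolding orbit_def base_def by (auto simp: act_coset matrix_mul_assoc)


lemma det_mult_SL3: "A \<in> SL3 \<Longrightarrow> B \<in> SL3 \<Longrightarrow> A ** B \<in> SL3"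
  by (simp add: SL3_def det_mul)

lemma cover_generic:
  assumes core: "\<And>u. u \<in> Pgrp \<Longrightarrow> \<exists>r\<in>Pgrp. \<exists>m1\<in>Pgrp. \<exists>m2\<in>Pgrp. \<exists>n\<in>N.
                   v ** r = m1 ** v \<and> w ** u ** r = m2 ** w ** n"
  shows "cell v w \<subseteq> (\<Union>n\<in>N. orbit (base v w n))"
proof
  fix X assume "X \<in> cell v w"
  then obtain p p' g where pp: "p \<in> Pgrp" "p' \<in> Pgrp" "g \<in> SL3"
    and X: "X = (Pcoset g, Pcoset (v ** p ** g), Pcoset (w ** p' ** g))"
    unfolding cell_eq by auto
  define u where "u = p' ** pinv p"
  have u: "u \<in> Pgrp" unfolding u_def using pp P_pinv P_mult by auto
  obtain r m1 m2 n where r: "r \<in> Pgrp" "m1 \<in> Pgrp" "m2 \<in> Pgrp" "n \<in> N"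
    and e1: "v ** r = m1 ** v" and e2: "w ** u ** r = m2 ** w ** n"
    using core[OF u] by blast
  define q where "q = pinv r ** p"
  have q: "q \<in> Pgrp" unfolding q_def using r pp P_pinv P_mult by auto
  define h where "h = q ** g"
  have h: "h \<in> SL3" unfolding h_def using q pp P_SL3 det_mult_SL3 by auto
  have rr: "r ** pinv r = mat 1" using P_pinv r by auto
  have up: "u ** p = p'" unfolding u_def using P_pinv(3)[OF pp(1)]
    by (simp add: matrix_mul_assoc[symmetric])
  have 1: "Pcoset h = Pcoset g" unfolding h_def using q Pcoset_mult by auto
  have "v ** p ** g = (v ** r) ** pinv r ** p ** g"
    using rr by (simp add: matrix_mul_assoc[symmetric])
  also have "\<dots> = m1 ** (v ** h)" unfolding e1 h_def q_def by (simp add: matrix_mul_assoc)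
  finally have 2: "Pcoset (v ** p ** g) = Pcoset (v ** h)" using r Pcoset_mult by auto
  have "w ** p' ** g = (w ** u ** r) ** pinv r ** p ** g"
    using rr up by (simp add: matrix_mul_assoc[symmetric])
  also have "\<dots> = m2 ** (w ** n ** h)" unfolding e2 h_def q_def by (simp add: matrix_mul_assoc)
  finally have 3: "Pcoset (w ** p' ** g) = Pcoset (w ** n ** h)" using r Pcoset_mult by auto
  have "X \<in> orbit (base v w n)" unfolding orbit_base X 1[symmetric] 2 3 using h by auto
  then show "X \<in> (\<Union>n\<in>N. orbit (base v w n))" using r by auto
qed

lemma orbit_sub_cell: "n \<in> Pgrp \<Longrightarrow> orbit (base v w n) \<subseteq> cell v w"
  unfolding orbit_base cell_eq using P_one by (force simp: matrix_mul_assoc)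

lemma cell_union:
  assumes "\<And>u. u \<in> Pgrp \<Longrightarrow> \<exists>r\<in>Pgrp. \<exists>m1\<in>Pgrp. \<exists>m2\<in>Pgrp. \<exists>n\<in>N.
                   v ** r = m1 ** v \<and> w ** u ** r = m2 ** w ** n"
    and "N \<subseteq> Pgrp"
  shows "cell v w = (\<Union>n\<in>N. orbit (base v w n))"
  using cover_generic[OF assms(1)] orbit_sub_cell assms(2) by blast

lemma nmat_P: "nmat x y z \<in> Pgrp"
  by (simp add: nmat_def Pgrp_mat3)

lemma z1_r: "z1 ** mat3 \<alpha> 0 0 0 \<beta> \<gamma> 0 0 \<delta> = mat3 \<beta> \<gamma> 0 0 \<delta> 0 0 0 \<alpha> ** z1"
  by (simp add: z1_def mat3_mult)

lemma core_a:
  assumes "u \<in> Pgrp"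
  shows "\<exists>r\<in>Pgrp. \<exists>m1\<in>Pgrp. \<exists>m2\<in>Pgrp. \<exists>n\<in>{nmat 1 0 0, nmat 0 1 0, nmat 0 0 0}.
                   z1 ** r = m1 ** z1 \<and> z1 ** u ** r = m2 ** z1 ** n"
proof -
  obtain a x y b z c where u: "u = mat3 a x y 0 b z 0 0 c" "a*b*c = 1"
    using assms by (rule PgrpE)
  then have nz: "a \<noteq> 0" "b \<noteq> 0" "c \<noteq> 0" by auto
  have cc: "c = 1/(a*b)" using u nz by (simp add: field_simps)
  consider "x \<noteq> 0" | "x = 0" "y \<noteq> 0" | "x = 0" "y = 0" by blast
  then show ?thesis
  proof cases
    case 1
    show ?thesis
      apply (rule bexI[where x="mat3 1 0 0 0 (a/x) (-y/a) 0 0 (x/a)"])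
      apply (rule bexI[where x="mat3 (a/x) (-y/a) 0 0 (x/a) 0 0 0 1"])
      apply (rule bexI[where x="mat3 (b*a/x) ((z*x-b*y)/a) 0 0 (c*x/a) 0 0 0 a"])
      apply (rule bexI[where x="nmat 1 0 0"])
      using 1 nz cc u by (simp_all add: z1_def nmat_def mat3_mult mat3_eq Pgrp_mat3 field_simps)
  next
    case 2
    show ?thesis
      apply (rule bexI[where x="mat3 1 0 0 0 (y/a) 0 0 0 (a/y)"])
      apply (rule bexI[where x="mat3 (y/a) 0 0 0 (a/y) 0 0 0 1"])
      apply (rule bexI[where x="mat3 (b*y/a) (z*a/y) 0 0 (c*a/y) 0 0 0 a"])
      apply (rule bexI[where x="nmat 0 1 0"])
      using 2 nz cc u by (simp_all add: z1_def nmat_def mat3_mult mat3_eq Pgrp_mat3 field_simps)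
  next
    case 3
    show ?thesis
      apply (rule bexI[where x="mat3 1 0 0 0 1 0 0 0 1"])
      apply (rule bexI[where x="mat3 1 0 0 0 1 0 0 0 1"])
      apply (rule bexI[where x="mat3 b z 0 0 c 0 0 0 a"])
      apply (rule bexI[where x="nmat 0 0 0"])
      using 3 nz cc u by (simp_all add: z1_def nmat_def mat3_mult mat3_eq Pgrp_mat3 field_simps)
  qed
qed


lemma core_b:
  assumes "u \<in> Pgrp"
  shows "\<exists>r\<in>Pgrp. \<exists>m1\<in>Pgrp. \<exists>m2\<in>Pgrp. \<exists>n\<in>{nmat 0 1 0, nmat 0 0 0}.
                   z1 ** r = m1 ** z1 \<and> z2 ** u ** r = m2 ** z2 ** n"
proof -
  obtain a x y b z c where u: "u = mat3 a x y 0 b z 0 0 c" "a*b*c = 1"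
    using assms by (rule PgrpE)
  then have nz: "a \<noteq> 0" "b \<noteq> 0" "c \<noteq> 0" by auto
  have cc: "c = 1/(a*b)" using u nz by (simp add: field_simps)
  consider "b*y - x*z \<noteq> 0" | "b*y - x*z = 0" by blast
  then show ?thesis
  proof cases
    case 1
    define D where "D = b*y - x*z"
    have D: "D \<noteq> 0" using 1 D_def by simp
    have Da: "D*a + a*(x*z) = a*(b*y)" by (simp add: D_def algebra_simps)
    show ?thesis
      apply (rule bexI[where x="mat3 1 0 0 0 (D/(a*b)) (-z*a/D) 0 0 (a*b/D)"])
      apply (rule bexI[where x="mat3 (D/(a*b)) (-z*a/D) 0 0 (a*b/D) 0 0 0 1"])
      apply (rule bexI[where x="mat3 (c*a*b/D) 0 0 0 a (x*D/(a*b)) 0 0 (D/a)"])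
      apply (rule bexI[where x="nmat 0 1 0"])
      using D D_def Da nz cc u by (simp_all add: z1_def z2_def nmat_def mat1_mat3 mat3_mult mat3_eq Pgrp_mat3 field_simps)
  next
    case 2
    show ?thesis
      apply (rule bexI[where x="mat3 1 0 0 0 1 (-z/b) 0 0 1"])
      apply (rule bexI[where x="mat3 1 (-z/b) 0 0 1 0 0 0 1"])
      apply (rule bexI[where x="mat3 c 0 0 0 a x 0 0 b"])
      apply (rule bexI[where x="nmat 0 0 0"])
      using 2 nz cc u by (simp_all add: z1_def z2_def nmat_def mat1_mat3 mat3_mult mat3_eq Pgrp_mat3 field_simps)
  qed
qed

lemma core_c:
  assumes "u \<in> Pgrp"
  shows "\<exists>r\<in>Pgrp. \<exists>m1\<in>Pgrp. \<exists>m2\<in>Pgrp. \<exists>n\<in>{nmat 1 0 0, nmat 0 0 0}.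
                   z1 ** r = m1 ** z1 \<and> s1 ** u ** r = m2 ** s1 ** n"
proof -
  obtain a x y b z c where u: "u = mat3 a x y 0 b z 0 0 c" "a*b*c = 1"
    using assms by (rule PgrpE)
  then have nz: "a \<noteq> 0" "b \<noteq> 0" "c \<noteq> 0" by auto
  have cc: "c = 1/(a*b)" using u nz by (simp add: field_simps)
  consider "x \<noteq> 0" | "x = 0" by blast
  then show ?thesis
  proof cases
    case 1
    show ?thesis
      apply (rule bexI[where x="mat3 1 0 0 0 (a/x) 0 0 0 (x/a)"])
      apply (rule bexI[where x="mat3 (a/x) 0 0 0 (x/a) 0 0 0 1"])
      apply (rule bexI[where x="mat3 (b*a/x) 0 (-(z*x/a)) 0 a (-(y*x/a)) 0 0 (c*x/a)"])
      apply (rule bexI[where x="nmat 1 0 0"])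
      using 1 nz cc u by (simp_all add: z1_def s1_def nmat_def mat1_mat3 mat3_mult mat3_eq Pgrp_mat3 field_simps)
  next
    case 2
    show ?thesis
      apply (rule bexI[where x="mat3 1 0 0 0 1 0 0 0 1"])
      apply (rule bexI[where x="mat3 1 0 0 0 1 0 0 0 1"])
      apply (rule bexI[where x="mat3 b 0 (-z) 0 a (-y) 0 0 c"])
      apply (rule bexI[where x="nmat 0 0 0"])
      using 2 nz cc u by (simp_all add: z1_def s1_def nmat_def mat1_mat3 mat3_mult mat3_eq Pgrp_mat3 field_simps)
  qed
qed

lemma core_d:
  assumes "u \<in> Pgrp"
  shows "\<exists>r\<in>Pgrp. \<exists>m1\<in>Pgrp. \<exists>m2\<in>Pgrp. \<exists>n\<in>{mat 1}.
                   z1 ** r = m1 ** z1 \<and> s2 ** u ** r = m2 ** s2 ** n"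
proof -
  obtain a x y b z c where u: "u = mat3 a x y 0 b z 0 0 c" "a*b*c = 1"
    using assms by (rule PgrpE)
  then have nz: "a \<noteq> 0" "b \<noteq> 0" "c \<noteq> 0" by auto
  have cc: "c = 1/(a*b)" using u nz by (simp add: field_simps)
  show ?thesis
      apply (rule bexI[where x="mat3 1 0 0 0 1 (-z/b) 0 0 1"])
      apply (rule bexI[where x="mat3 1 (-z/b) 0 0 1 0 0 0 1"])
      apply (rule bexI[where x="mat3 a (-(y - x*z/b)) (-x) 0 c 0 0 0 b"])
      apply (rule bexI[where x="mat 1"])
      using u nz cc u by (simp_all add: z1_def s2_def nmat_def mat1_mat3 mat3_mult mat3_eq Pgrp_mat3 field_simps)
qed

lemma core_e:
  assumes "u \<in> Pgrp"
  shows "\<exists>r\<in>Pgrp. \<exists>m1\<in>Pgrp. \<exists>m2\<in>Pgrp. \<exists>n\<in>{mat 1}.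
                   z1 ** r = m1 ** z1 \<and> mat 1 ** u ** r = m2 ** mat 1 ** n"
  apply (rule bexI[where x="mat 1"])
  apply (rule bexI[where x="mat 1"])
  apply (rule bexI[where x="u"])
  apply (rule bexI[where x="mat 1"])
  using assms P_one by auto


lemma orbit_disj:
  assumes "\<not>(\<exists>p\<in>Pgrp. \<exists>p'\<in>Pgrp. \<exists>p''\<in>Pgrp. v ** p = p' ** v \<and> w ** n ** p = p'' ** w ** n')"
  shows "orbit (base v w n) \<inter> orbit (base v w n') = {}"
proof (rule ccontr)
  assume "orbit (base v w n) \<inter> orbit (base v w n') \<noteq> {}"
  then obtain g h where g: "g \<in> SL3" "h \<in> SL3"
    and e: "Pcoset g = Pcoset h" "Pcoset (v ** g) = Pcoset (v ** h)" "Pcoset (w ** n ** g) = Pcoset (w ** n' ** h)"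
    unfolding orbit_base by auto
  obtain p where p: "p \<in> Pgrp" "g = p ** h" using Pcoset_eqD[OF e(1)] by auto
  obtain p' where p': "p' \<in> Pgrp" "v ** g = p' ** (v ** h)" using Pcoset_eqD[OF e(2)] by auto
  obtain p'' where p'': "p'' \<in> Pgrp" "w ** n ** g = p'' ** (w ** n' ** h)" using Pcoset_eqD[OF e(3)] by auto
  have "(v ** p) ** h = (p' ** v) ** h" using p p' by (simp add: matrix_mul_assoc)
  then have 1: "v ** p = p' ** v" using SL3_cancel g by blast
  have "(w ** n ** p) ** h = (p'' ** w ** n') ** h" using p p'' by (simp add: matrix_mul_assoc)
  then have 2: "w ** n ** p = p'' ** w ** n'" using SL3_cancel g by blast
  show False using assms p p' p'' 1 2 by blast
qed

lemma stab_base: "stab (base v w n) = {g \<in> Pgrp. (\<exists>p'\<in>Pgrp. v ** g = p' ** v) \<and> (\<exists>p''\<in>Pgrp. w ** n ** g = p'' ** w ** n)}"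
proof (intro set_eqI iffI)
  fix g assume "g \<in> stab (base v w n)"
  then have g: "g \<in> SL3" and e: "Pcoset g = Pcoset (mat 1)" "Pcoset (v ** g) = Pcoset v" "Pcoset (w ** n ** g) = Pcoset (w ** n)"
    unfolding stab_def base_def by (auto simp: act_coset matrix_mul_assoc)
  show "g \<in> {g \<in> Pgrp. (\<exists>p'\<in>Pgrp. v ** g = p' ** v) \<and> (\<exists>p''\<in>Pgrp. w ** n ** g = p'' ** w ** n)}"
    using Pcoset_eqD[OF e(1)] Pcoset_eqD[OF e(2)] Pcoset_eqD[OF e(3)] by (auto simp: matrix_mul_assoc)
next
  fix g assume "g \<in> {g \<in> Pgrp. (\<exists>p'\<in>Pgrp. v ** g = p' ** v) \<and> (\<exists>p''\<in>Pgrp. w ** n ** g = p'' ** w ** n)}"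
  then obtain p' p'' where g: "g \<in> Pgrp" "p' \<in> Pgrp" "p'' \<in> Pgrp" "v ** g = p' ** v" "w ** n ** g = p'' ** w ** n"
    by auto
  have "Pcoset (mat 1 ** g) = Pcoset (mat 1)" using Pcoset_mult[OF g(1), of "mat 1"] by simp
  moreover have "Pcoset (v ** g) = Pcoset v" using g Pcoset_mult by simp
  moreover have "w ** n ** g = p'' ** (w ** n)" using g(5) by (simp add: matrix_mul_assoc)
  then have "Pcoset (w ** n ** g) = Pcoset (w ** n)" using Pcoset_mult[OF g(3)] by simp
  ultimately show "g \<in> stab (base v w n)"
    unfolding stab_def base_def using P_SL3[OF g(1)] by (simp add: act_coset matrix_mul_assoc)
qed

lemma disj_a12: "\<not>(\<exists>p\<in>Pgrp. \<exists>p'\<in>Pgrp. \<exists>p''\<in>Pgrp. z1 ** p = p' ** z1 \<and> z1 ** nmat 1 0 0 ** p = p'' ** z1 ** nmat 0 1 0)"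
  by (auto elim!: PgrpE simp: z1_def nmat_def mat3_mult mat3_eq)



lemma disj_a13: "\<not>(\<exists>p\<in>Pgrp. \<exists>p'\<in>Pgrp. \<exists>p''\<in>Pgrp. z1 ** p = p' ** z1 \<and> z1 ** nmat 1 0 0 ** p = p'' ** z1 ** nmat 0 0 0)"
  by (auto elim!: PgrpE simp: z1_def nmat_def mat3_mult mat3_eq)

lemma disj_a23: "\<not>(\<exists>p\<in>Pgrp. \<exists>p'\<in>Pgrp. \<exists>p''\<in>Pgrp. z1 ** p = p' ** z1 \<and> z1 ** nmat 0 1 0 ** p = p'' ** z1 ** nmat 0 0 0)"
  by (auto elim!: PgrpE simp: z1_def nmat_def mat3_mult mat3_eq)

lemma disj_b: "\<not>(\<exists>p\<in>Pgrp. \<exists>p'\<in>Pgrp. \<exists>p''\<in>Pgrp. z1 ** p = p' ** z1 \<and> z2 ** nmat 0 1 0 ** p = p'' ** z2 ** nmat 0 0 0)"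
  by (auto elim!: PgrpE simp: z1_def z2_def nmat_def mat3_mult mat3_eq)

lemma disj_c: "\<not>(\<exists>p\<in>Pgrp. \<exists>p'\<in>Pgrp. \<exists>p''\<in>Pgrp. z1 ** p = p' ** z1 \<and> s1 ** nmat 1 0 0 ** p = p'' ** s1 ** nmat 0 0 0)"
  by (auto elim!: PgrpE simp: z1_def s1_def nmat_def mat3_mult mat3_eq)

lemma H3_eq: "setmul Dgrp {nmat 0 0 x | x. True} = {mat3 a 0 0 0 b z 0 0 c | a b c z. a*b*c = 1}"
proof (intro set_eqI iffI)
  fix g assume "g \<in> setmul Dgrp {nmat 0 0 x | x. True}"
  then obtain a b c x where "a*b*c = 1" "g = dmat a b c ** nmat 0 0 x"
    unfolding setmul_def Dgrp_def by auto
  then show "g \<in> {mat3 a 0 0 0 b z 0 0 c | a b c z. a*b*c = 1}"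
    by (auto simp: dmat_def nmat_def mat3_mult)
next
  fix g assume "g \<in> {mat3 a 0 0 0 b z 0 0 c | a b c z. a*b*c = 1}"
  then obtain a b c z where abc: "a*b*c = 1" "g = mat3 a 0 0 0 b z 0 0 c" by auto
  then have "b \<noteq> 0" by auto
  then have "g = dmat a b c ** nmat 0 0 (z/b)" using abc by (simp add: dmat_def nmat_def mat3_mult)
  then show "g \<in> setmul Dgrp {nmat 0 0 x | x. True}"
    unfolding setmul_def Dgrp_def using abc by blast
qed

lemma Dgrp_eq: "Dgrp = {mat3 a 0 0 0 b 0 0 0 c | a b c. a*b*c = 1}"
  unfolding Dgrp_def dmat_def by auto


lemma stab_a1: "stab (base z1 z1 (nmat 1 0 0)) = {dmat a a (1 / a^2) | a. a \<noteq> 0}"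
proof (intro set_eqI iffI)
  fix g assume "g \<in> stab (base z1 z1 (nmat 1 0 0))"
  then obtain p' p'' where h: "g \<in> Pgrp" "p' \<in> Pgrp" "p'' \<in> Pgrp" "z1 ** g = p' ** z1"
     "z1 ** nmat 1 0 0 ** g = p'' ** z1 ** nmat 1 0 0"
    unfolding stab_base by auto
  obtain a x y b z c where g: "g = mat3 a x y 0 b z 0 0 c" "a*b*c = 1" using h(1) by (rule PgrpE)
  obtain a1 x1 y1 b1 z1' c1 where p1: "p' = mat3 a1 x1 y1 0 b1 z1' 0 0 c1" using h(2) by (rule PgrpE)
  obtain a2 x2 y2 b2 z2' c2 where p2: "p'' = mat3 a2 x2 y2 0 b2 z2' 0 0 c2" using h(3) by (rule PgrpE)
  have "x = 0 \<and> y = 0 \<and> z = 0 \<and> b = a" using h(4,5) unfolding g p1 p2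
    by (simp add: z1_def nmat_def mat3_mult mat3_eq)
  moreover have "a \<noteq> 0" "b \<noteq> 0" "c \<noteq> 0" using g by auto
  ultimately have "g = dmat a a (1/a^2) \<and> a \<noteq> 0" using g by (auto simp: dmat_def mat3_eq field_simps power2_eq_square)
  then show "g \<in> {dmat a a (1 / a^2) | a. a \<noteq> 0}" by blast
next
  fix g assume "g \<in> {dmat a a (1 / a^2) | a. a \<noteq> 0}"
  then obtain a where a: "a \<noteq> 0" "g = dmat a a (1/a^2)" by auto
  show "g \<in> stab (base z1 z1 (nmat 1 0 0))" unfolding stab_base
    apply (intro CollectI conjI bexI[where x="mat3 a 0 0 0 (1/a^2) 0 0 0 a"])
    using a by (simp_all add: z1_def nmat_def dmat_def mat3_mult mat3_eq Pgrp_mat3 field_simps power2_eq_square)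
qed


lemma stab_a2: "stab (base z1 z1 (nmat 0 1 0)) = {mat3 a 0 0 0 (1 / a^2) x 0 0 a | a x. a \<noteq> 0}"
  
proof (intro set_eqI iffI)
  fix g assume "g \<in> stab (base z1 z1 (nmat 0 1 0))"
  then obtain p' p'' where h: "g \<in> Pgrp" "p' \<in> Pgrp" "p'' \<in> Pgrp" "z1 ** g = p' ** z1"
     "z1 ** (nmat 0 1 0) ** g = p'' ** z1 ** (nmat 0 1 0)"
    unfolding stab_base by auto
  obtain a x y b z c where g: "g = mat3 a x y 0 b z 0 0 c" "a*b*c = 1" using h(1) by (rule PgrpE)
  obtain a1 x1 y1 b1 z1' c1 where p1: "p' = mat3 a1 x1 y1 0 b1 z1' 0 0 c1" using h(2) by (rule PgrpE)
  obtain a2 x2 y2 b2 z2' c2 where p2: "p'' = mat3 a2 x2 y2 0 b2 z2' 0 0 c2" using h(3) by (rule PgrpE)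
  have "x = 0 \<and> y = 0 \<and> c = a" using h(4,5) unfolding g p1 p2
    by (simp add: z1_def z2_def s1_def s2_def nmat_def mat1_mat3 mat3_mult mat3_eq)
  moreover have "a \<noteq> 0" "b \<noteq> 0" "c \<noteq> 0" using g by auto
  ultimately have "g = mat3 a 0 0 0 (1/a^2) z 0 0 a \<and> a \<noteq> 0" using g by (auto simp: dmat_def mat3_eq field_simps power2_eq_square)
  then show "g \<in> {mat3 a 0 0 0 (1 / a^2) x 0 0 a | a x. a \<noteq> 0}" by blast
next
  fix g assume "g \<in> {mat3 a 0 0 0 (1 / a^2) x 0 0 a | a x. a \<noteq> 0}"
  then obtain a x where a: "a \<noteq> 0" "g = mat3 a 0 0 0 (1/a^2) x 0 0 a" by auto
  have nz: "a \<noteq> 0" using a by auto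
  show "g \<in> stab (base z1 z1 (nmat 0 1 0))" unfolding stab_base
  proof (intro CollectI conjI)
    show "g \<in> Pgrp" using a nz by (simp add: z1_def z2_def s1_def s2_def nmat_def mat1_mat3 dmat_def mat3_mult mat3_eq Pgrp_mat3 field_simps power2_eq_square)
    have "mat3 (1/a^2) x 0 0 a 0 0 0 a \<in> Pgrp" using a nz by (simp add: z1_def z2_def s1_def s2_def nmat_def mat1_mat3 dmat_def mat3_mult mat3_eq Pgrp_mat3 field_simps power2_eq_square)
    moreover have "z1 ** g = (mat3 (1/a^2) x 0 0 a 0 0 0 a) ** z1" using a nz by (simp add: z1_def z2_def s1_def s2_def nmat_def mat1_mat3 dmat_def mat3_mult mat3_eq Pgrp_mat3 field_simps power2_eq_square)
    ultimately show "\<exists>p'\<in>Pgrp. z1 ** g = p' ** z1" by blast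
  next
    have "mat3 (1/a^2) x 0 0 a 0 0 0 a \<in> Pgrp" using a nz by (simp add: z1_def z2_def s1_def s2_def nmat_def mat1_mat3 dmat_def mat3_mult mat3_eq Pgrp_mat3 field_simps power2_eq_square)
    moreover have "z1 ** (nmat 0 1 0) ** g = (mat3 (1/a^2) x 0 0 a 0 0 0 a) ** z1 ** (nmat 0 1 0)" using a nz by (simp add: z1_def z2_def s1_def s2_def nmat_def mat1_mat3 dmat_def mat3_mult mat3_eq Pgrp_mat3 field_simps power2_eq_square)
    ultimately show "\<exists>p''\<in>Pgrp. z1 ** (nmat 0 1 0) ** g = p'' ** z1 ** (nmat 0 1 0)" by blast
  qed
qed

lemma stab_a3: "stab (base z1 z1 (nmat 0 0 0)) = setmul Dgrp {nmat 0 0 x | x. True}"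
  unfolding H3_eq 
proof (intro set_eqI iffI)
  fix g assume "g \<in> stab (base z1 z1 (nmat 0 0 0))"
  then obtain p' p'' where h: "g \<in> Pgrp" "p' \<in> Pgrp" "p'' \<in> Pgrp" "z1 ** g = p' ** z1"
     "z1 ** (nmat 0 0 0) ** g = p'' ** z1 ** (nmat 0 0 0)"
    unfolding stab_base by auto
  obtain a x y b z c where g: "g = mat3 a x y 0 b z 0 0 c" "a*b*c = 1" using h(1) by (rule PgrpE)
  obtain a1 x1 y1 b1 z1' c1 where p1: "p' = mat3 a1 x1 y1 0 b1 z1' 0 0 c1" using h(2) by (rule PgrpE)
  obtain a2 x2 y2 b2 z2' c2 where p2: "p'' = mat3 a2 x2 y2 0 b2 z2' 0 0 c2" using h(3) by (rule PgrpE)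
  have "x = 0 \<and> y = 0" using h(4,5) unfolding g p1 p2
    by (simp add: z1_def z2_def s1_def s2_def nmat_def mat1_mat3 mat3_mult mat3_eq)
  moreover have "a \<noteq> 0" "b \<noteq> 0" "c \<noteq> 0" using g by auto
  ultimately have "g = mat3 a 0 0 0 b z 0 0 c \<and> a*b*c = 1" using g by (auto simp: dmat_def mat3_eq field_simps power2_eq_square)
  then show "g \<in> {mat3 a 0 0 0 b z 0 0 c | a b c z. a*b*c = 1}" by blast
next
  fix g assume "g \<in> {mat3 a 0 0 0 b z 0 0 c | a b c z. a*b*c = 1}"
  then obtain a b c z where a: "a*b*c = 1" "g = mat3 a 0 0 0 b z 0 0 c" by auto
  have nz: "a \<noteq> 0" using a by auto
  show "g \<in> stab (base z1 z1 (nmat 0 0 0))" unfolding stab_base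
  proof (intro CollectI conjI)
    show "g \<in> Pgrp" using a nz by (simp add: z1_def z2_def s1_def s2_def nmat_def mat1_mat3 dmat_def mat3_mult mat3_eq Pgrp_mat3 field_simps power2_eq_square)
    have "mat3 b z 0 0 c 0 0 0 a \<in> Pgrp" using a nz by (simp add: z1_def z2_def s1_def s2_def nmat_def mat1_mat3 dmat_def mat3_mult mat3_eq Pgrp_mat3 field_simps power2_eq_square)
    moreover have "z1 ** g = (mat3 b z 0 0 c 0 0 0 a) ** z1" using a nz by (simp add: z1_def z2_def s1_def s2_def nmat_def mat1_mat3 dmat_def mat3_mult mat3_eq Pgrp_mat3 field_simps power2_eq_square)
    ultimately show "\<exists>p'\<in>Pgrp. z1 ** g = p' ** z1" by blast
  next
    have "mat3 b z 0 0 c 0 0 0 a \<in> Pgrp" using a nz by (simp add: z1_def z2_def s1_def s2_def nmat_def mat1_mat3 dmat_def mat3_mult mat3_eq Pgrp_mat3 field_simps power2_eq_square)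
    moreover have "z1 ** (nmat 0 0 0) ** g = (mat3 b z 0 0 c 0 0 0 a) ** z1 ** (nmat 0 0 0)" using a nz by (simp add: z1_def z2_def s1_def s2_def nmat_def mat1_mat3 dmat_def mat3_mult mat3_eq Pgrp_mat3 field_simps power2_eq_square)
    ultimately show "\<exists>p''\<in>Pgrp. z1 ** (nmat 0 0 0) ** g = p'' ** z1 ** (nmat 0 0 0)" by blast
  qed
qed

lemma stab_b1: "stab (base z1 z2 (nmat 0 1 0)) = {dmat a (1 / a^2) a | a. a \<noteq> 0}"
  
proof (intro set_eqI iffI)
  fix g assume "g \<in> stab (base z1 z2 (nmat 0 1 0))"
  then obtain p' p'' where h: "g \<in> Pgrp" "p' \<in> Pgrp" "p'' \<in> Pgrp" "z1 ** g = p' ** z1"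
     "z2 ** (nmat 0 1 0) ** g = p'' ** z2 ** (nmat 0 1 0)"
    unfolding stab_base by auto
  obtain a x y b z c where g: "g = mat3 a x y 0 b z 0 0 c" "a*b*c = 1" using h(1) by (rule PgrpE)
  obtain a1 x1 y1 b1 z1' c1 where p1: "p' = mat3 a1 x1 y1 0 b1 z1' 0 0 c1" using h(2) by (rule PgrpE)
  obtain a2 x2 y2 b2 z2' c2 where p2: "p'' = mat3 a2 x2 y2 0 b2 z2' 0 0 c2" using h(3) by (rule PgrpE)
  have "x = 0 \<and> y = 0 \<and> z = 0 \<and> c = a" using h(4,5) unfolding g p1 p2
    by (simp add: z1_def z2_def s1_def s2_def nmat_def mat1_mat3 mat3_mult mat3_eq)
  moreover have "a \<noteq> 0" "b \<noteq> 0" "c \<noteq> 0" using g by auto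
  ultimately have "g = dmat a (1/a^2) a \<and> a \<noteq> 0" using g by (auto simp: dmat_def mat3_eq field_simps power2_eq_square)
  then show "g \<in> {dmat a (1 / a^2) a | a. a \<noteq> 0}" by blast
next
  fix g assume "g \<in> {dmat a (1 / a^2) a | a. a \<noteq> 0}"
  then obtain a where a: "a \<noteq> 0" "g = dmat a (1/a^2) a" by auto
  have nz: "a \<noteq> 0" using a by auto
  show "g \<in> stab (base z1 z2 (nmat 0 1 0))" unfolding stab_base
  proof (intro CollectI conjI)
    show "g \<in> Pgrp" using a nz by (simp add: z1_def z2_def s1_def s2_def nmat_def mat1_mat3 dmat_def mat3_mult mat3_eq Pgrp_mat3 field_simps power2_eq_square)
    have "mat3 (1/a^2) 0 0 0 a 0 0 0 a \<in> Pgrp" using a nz by (simp add: z1_def z2_def s1_def s2_def nmat_def mat1_mat3 dmat_def mat3_mult mat3_eq Pgrp_mat3 field_simps power2_eq_square)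
    moreover have "z1 ** g = (mat3 (1/a^2) 0 0 0 a 0 0 0 a) ** z1" using a nz by (simp add: z1_def z2_def s1_def s2_def nmat_def mat1_mat3 dmat_def mat3_mult mat3_eq Pgrp_mat3 field_simps power2_eq_square)
    ultimately show "\<exists>p'\<in>Pgrp. z1 ** g = p' ** z1" by blast
  next
    have "mat3 a 0 0 0 a 0 0 0 (1/a^2) \<in> Pgrp" using a nz by (simp add: z1_def z2_def s1_def s2_def nmat_def mat1_mat3 dmat_def mat3_mult mat3_eq Pgrp_mat3 field_simps power2_eq_square)
    moreover have "z2 ** (nmat 0 1 0) ** g = (mat3 a 0 0 0 a 0 0 0 (1/a^2)) ** z2 ** (nmat 0 1 0)" using a nz by (simp add: z1_def z2_def s1_def s2_def nmat_def mat1_mat3 dmat_def mat3_mult mat3_eq Pgrp_mat3 field_simps power2_eq_square)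
    ultimately show "\<exists>p''\<in>Pgrp. z2 ** (nmat 0 1 0) ** g = p'' ** z2 ** (nmat 0 1 0)" by blast
  qed
qed

lemma stab_b2: "stab (base z1 z2 (nmat 0 0 0)) = Dgrp"
  unfolding Dgrp_eq 
proof (intro set_eqI iffI)
  fix g assume "g \<in> stab (base z1 z2 (nmat 0 0 0))"
  then obtain p' p'' where h: "g \<in> Pgrp" "p' \<in> Pgrp" "p'' \<in> Pgrp" "z1 ** g = p' ** z1"
     "z2 ** (nmat 0 0 0) ** g = p'' ** z2 ** (nmat 0 0 0)"
    unfolding stab_base by auto
  obtain a x y b z c where g: "g = mat3 a x y 0 b z 0 0 c" "a*b*c = 1" using h(1) by (rule PgrpE)
  obtain a1 x1 y1 b1 z1' c1 where p1: "p' = mat3 a1 x1 y1 0 b1 z1' 0 0 c1" using h(2) by (rule PgrpE)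
  obtain a2 x2 y2 b2 z2' c2 where p2: "p'' = mat3 a2 x2 y2 0 b2 z2' 0 0 c2" using h(3) by (rule PgrpE)
  have "x = 0 \<and> y = 0 \<and> z = 0" using h(4,5) unfolding g p1 p2
    by (simp add: z1_def z2_def s1_def s2_def nmat_def mat1_mat3 mat3_mult mat3_eq)
  moreover have "a \<noteq> 0" "b \<noteq> 0" "c \<noteq> 0" using g by auto
  ultimately have "g = mat3 a 0 0 0 b 0 0 0 c \<and> a*b*c = 1" using g by (auto simp: dmat_def mat3_eq field_simps power2_eq_square)
  then show "g \<in> {mat3 a 0 0 0 b 0 0 0 c | a b c. a*b*c = 1}" by blast
next
  fix g assume "g \<in> {mat3 a 0 0 0 b 0 0 0 c | a b c. a*b*c = 1}"
  then obtain a b c where a: "a*b*c = 1" "g = mat3 a 0 0 0 b 0 0 0 c" by auto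
  have nz: "a \<noteq> 0" using a by auto
  show "g \<in> stab (base z1 z2 (nmat 0 0 0))" unfolding stab_base
  proof (intro CollectI conjI)
    show "g \<in> Pgrp" using a nz by (simp add: z1_def z2_def s1_def s2_def nmat_def mat1_mat3 dmat_def mat3_mult mat3_eq Pgrp_mat3 field_simps power2_eq_square)
    have "mat3 b 0 0 0 c 0 0 0 a \<in> Pgrp" using a nz by (simp add: z1_def z2_def s1_def s2_def nmat_def mat1_mat3 dmat_def mat3_mult mat3_eq Pgrp_mat3 field_simps power2_eq_square)
    moreover have "z1 ** g = (mat3 b 0 0 0 c 0 0 0 a) ** z1" using a nz by (simp add: z1_def z2_def s1_def s2_def nmat_def mat1_mat3 dmat_def mat3_mult mat3_eq Pgrp_mat3 field_simps power2_eq_square)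
    ultimately show "\<exists>p'\<in>Pgrp. z1 ** g = p' ** z1" by blast
  next
    have "mat3 c 0 0 0 a 0 0 0 b \<in> Pgrp" using a nz by (simp add: z1_def z2_def s1_def s2_def nmat_def mat1_mat3 dmat_def mat3_mult mat3_eq Pgrp_mat3 field_simps power2_eq_square)
    moreover have "z2 ** (nmat 0 0 0) ** g = (mat3 c 0 0 0 a 0 0 0 b) ** z2 ** (nmat 0 0 0)" using a nz by (simp add: z1_def z2_def s1_def s2_def nmat_def mat1_mat3 dmat_def mat3_mult mat3_eq Pgrp_mat3 field_simps power2_eq_square)
    ultimately show "\<exists>p''\<in>Pgrp. z2 ** (nmat 0 0 0) ** g = p'' ** z2 ** (nmat 0 0 0)" by blast
  qed
qed

lemma stab_c1: "stab (base z1 s1 (nmat 1 0 0)) = {mat3 a 0 0 0 a x 0 0 (1 / a^2) | a x. a \<noteq> 0}"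
  
proof (intro set_eqI iffI)
  fix g assume "g \<in> stab (base z1 s1 (nmat 1 0 0))"
  then obtain p' p'' where h: "g \<in> Pgrp" "p' \<in> Pgrp" "p'' \<in> Pgrp" "z1 ** g = p' ** z1"
     "s1 ** (nmat 1 0 0) ** g = p'' ** s1 ** (nmat 1 0 0)"
    unfolding stab_base by auto
  obtain a x y b z c where g: "g = mat3 a x y 0 b z 0 0 c" "a*b*c = 1" using h(1) by (rule PgrpE)
  obtain a1 x1 y1 b1 z1' c1 where p1: "p' = mat3 a1 x1 y1 0 b1 z1' 0 0 c1" using h(2) by (rule PgrpE)
  obtain a2 x2 y2 b2 z2' c2 where p2: "p'' = mat3 a2 x2 y2 0 b2 z2' 0 0 c2" using h(3) by (rule PgrpE)
  have "x = 0 \<and> y = 0 \<and> b = a" using h(4,5) unfolding g p1 p2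
    by (simp add: z1_def z2_def s1_def s2_def nmat_def mat1_mat3 mat3_mult mat3_eq)
  moreover have "a \<noteq> 0" "b \<noteq> 0" "c \<noteq> 0" using g by auto
  ultimately have "g = mat3 a 0 0 0 a z 0 0 (1/a^2) \<and> a \<noteq> 0" using g by (auto simp: dmat_def mat3_eq field_simps power2_eq_square)
  then show "g \<in> {mat3 a 0 0 0 a x 0 0 (1 / a^2) | a x. a \<noteq> 0}" by blast
next
  fix g assume "g \<in> {mat3 a 0 0 0 a x 0 0 (1 / a^2) | a x. a \<noteq> 0}"
  then obtain a x where a: "a \<noteq> 0" "g = mat3 a 0 0 0 a x 0 0 (1/a^2)" by auto
  have nz: "a \<noteq> 0" using a by auto
  show "g \<in> stab (base z1 s1 (nmat 1 0 0))" unfolding stab_base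
  proof (intro CollectI conjI)
    show "g \<in> Pgrp" using a nz by (simp add: z1_def z2_def s1_def s2_def nmat_def mat1_mat3 dmat_def mat3_mult mat3_eq Pgrp_mat3 field_simps power2_eq_square)
    have "mat3 a x 0 0 (1/a^2) 0 0 0 a \<in> Pgrp" using a nz by (simp add: z1_def z2_def s1_def s2_def nmat_def mat1_mat3 dmat_def mat3_mult mat3_eq Pgrp_mat3 field_simps power2_eq_square)
    moreover have "z1 ** g = (mat3 a x 0 0 (1/a^2) 0 0 0 a) ** z1" using a nz by (simp add: z1_def z2_def s1_def s2_def nmat_def mat1_mat3 dmat_def mat3_mult mat3_eq Pgrp_mat3 field_simps power2_eq_square)
    ultimately show "\<exists>p'\<in>Pgrp. z1 ** g = p' ** z1" by blast
  next
    have "mat3 a 0 (-x) 0 a (-x) 0 0 (1/a^2) \<in> Pgrp" using a nz by (simp add: z1_def z2_def s1_def s2_def nmat_def mat1_mat3 dmat_def mat3_mult mat3_eq Pgrp_mat3 field_simps power2_eq_square)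
    moreover have "s1 ** (nmat 1 0 0) ** g = (mat3 a 0 (-x) 0 a (-x) 0 0 (1/a^2)) ** s1 ** (nmat 1 0 0)" using a nz by (simp add: z1_def z2_def s1_def s2_def nmat_def mat1_mat3 dmat_def mat3_mult mat3_eq Pgrp_mat3 field_simps power2_eq_square)
    ultimately show "\<exists>p''\<in>Pgrp. s1 ** (nmat 1 0 0) ** g = p'' ** s1 ** (nmat 1 0 0)" by blast
  qed
qed

lemma stab_c2: "stab (base z1 s1 (nmat 0 0 0)) = setmul Dgrp {nmat 0 0 x | x. True}"
  unfolding H3_eq 
proof (intro set_eqI iffI)
  fix g assume "g \<in> stab (base z1 s1 (nmat 0 0 0))"
  then obtain p' p'' where h: "g \<in> Pgrp" "p' \<in> Pgrp" "p'' \<in> Pgrp" "z1 ** g = p' ** z1"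
     "s1 ** (nmat 0 0 0) ** g = p'' ** s1 ** (nmat 0 0 0)"
    unfolding stab_base by auto
  obtain a x y b z c where g: "g = mat3 a x y 0 b z 0 0 c" "a*b*c = 1" using h(1) by (rule PgrpE)
  obtain a1 x1 y1 b1 z1' c1 where p1: "p' = mat3 a1 x1 y1 0 b1 z1' 0 0 c1" using h(2) by (rule PgrpE)
  obtain a2 x2 y2 b2 z2' c2 where p2: "p'' = mat3 a2 x2 y2 0 b2 z2' 0 0 c2" using h(3) by (rule PgrpE)
  have "x = 0 \<and> y = 0" using h(4,5) unfolding g p1 p2
    by (simp add: z1_def z2_def s1_def s2_def nmat_def mat1_mat3 mat3_mult mat3_eq)
  moreover have "a \<noteq> 0" "b \<noteq> 0" "c \<noteq> 0" using g by auto
  ultimately have "g = mat3 a 0 0 0 b z 0 0 c \<and> a*b*c = 1" using g by (auto simp: dmat_def mat3_eq field_simps power2_eq_square)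
  then show "g \<in> {mat3 a 0 0 0 b z 0 0 c | a b c z. a*b*c = 1}" by blast
next
  fix g assume "g \<in> {mat3 a 0 0 0 b z 0 0 c | a b c z. a*b*c = 1}"
  then obtain a b c z where a: "a*b*c = 1" "g = mat3 a 0 0 0 b z 0 0 c" by auto
  have nz: "a \<noteq> 0" using a by auto
  show "g \<in> stab (base z1 s1 (nmat 0 0 0))" unfolding stab_base
  proof (intro CollectI conjI)
    show "g \<in> Pgrp" using a nz by (simp add: z1_def z2_def s1_def s2_def nmat_def mat1_mat3 dmat_def mat3_mult mat3_eq Pgrp_mat3 field_simps power2_eq_square)
    have "mat3 b z 0 0 c 0 0 0 a \<in> Pgrp" using a nz by (simp add: z1_def z2_def s1_def s2_def nmat_def mat1_mat3 dmat_def mat3_mult mat3_eq Pgrp_mat3 field_simps power2_eq_square)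
    moreover have "z1 ** g = (mat3 b z 0 0 c 0 0 0 a) ** z1" using a nz by (simp add: z1_def z2_def s1_def s2_def nmat_def mat1_mat3 dmat_def mat3_mult mat3_eq Pgrp_mat3 field_simps power2_eq_square)
    ultimately show "\<exists>p'\<in>Pgrp. z1 ** g = p' ** z1" by blast
  next
    have "mat3 b 0 (-z) 0 a 0 0 0 c \<in> Pgrp" using a nz by (simp add: z1_def z2_def s1_def s2_def nmat_def mat1_mat3 dmat_def mat3_mult mat3_eq Pgrp_mat3 field_simps power2_eq_square)
    moreover have "s1 ** (nmat 0 0 0) ** g = (mat3 b 0 (-z) 0 a 0 0 0 c) ** s1 ** (nmat 0 0 0)" using a nz by (simp add: z1_def z2_def s1_def s2_def nmat_def mat1_mat3 dmat_def mat3_mult mat3_eq Pgrp_mat3 field_simps power2_eq_square)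
    ultimately show "\<exists>p''\<in>Pgrp. s1 ** (nmat 0 0 0) ** g = p'' ** s1 ** (nmat 0 0 0)" by blast
  qed
qed

lemma stab_d: "stab (base z1 s2 (mat 1)) = Dgrp"
  unfolding Dgrp_eq 
proof (intro set_eqI iffI)
  fix g assume "g \<in> stab (base z1 s2 (mat 1))"
  then obtain p' p'' where h: "g \<in> Pgrp" "p' \<in> Pgrp" "p'' \<in> Pgrp" "z1 ** g = p' ** z1"
     "s2 ** (mat 1) ** g = p'' ** s2 ** (mat 1)"
    unfolding stab_base by auto
  obtain a x y b z c where g: "g = mat3 a x y 0 b z 0 0 c" "a*b*c = 1" using h(1) by (rule PgrpE)
  obtain a1 x1 y1 b1 z1' c1 where p1: "p' = mat3 a1 x1 y1 0 b1 z1' 0 0 c1" using h(2) by (rule PgrpE)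
  obtain a2 x2 y2 b2 z2' c2 where p2: "p'' = mat3 a2 x2 y2 0 b2 z2' 0 0 c2" using h(3) by (rule PgrpE)
  have "x = 0 \<and> y = 0 \<and> z = 0" using h(4,5) unfolding g p1 p2
    by (simp add: z1_def z2_def s1_def s2_def nmat_def mat1_mat3 mat3_mult mat3_eq)
  moreover have "a \<noteq> 0" "b \<noteq> 0" "c \<noteq> 0" using g by auto
  ultimately have "g = mat3 a 0 0 0 b 0 0 0 c \<and> a*b*c = 1" using g by (auto simp: dmat_def mat3_eq field_simps power2_eq_square)
  then show "g \<in> {mat3 a 0 0 0 b 0 0 0 c | a b c. a*b*c = 1}" by blast
next
  fix g assume "g \<in> {mat3 a 0 0 0 b 0 0 0 c | a b c. a*b*c = 1}"
  then obtain a b c where a: "a*b*c = 1" "g = mat3 a 0 0 0 b 0 0 0 c" by auto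
  have nz: "a \<noteq> 0" using a by auto
  show "g \<in> stab (base z1 s2 (mat 1))" unfolding stab_base
  proof (intro CollectI conjI)
    show "g \<in> Pgrp" using a nz by (simp add: z1_def z2_def s1_def s2_def nmat_def mat1_mat3 dmat_def mat3_mult mat3_eq Pgrp_mat3 field_simps power2_eq_square)
    have "mat3 b 0 0 0 c 0 0 0 a \<in> Pgrp" using a nz by (simp add: z1_def z2_def s1_def s2_def nmat_def mat1_mat3 dmat_def mat3_mult mat3_eq Pgrp_mat3 field_simps power2_eq_square)
    moreover have "z1 ** g = (mat3 b 0 0 0 c 0 0 0 a) ** z1" using a nz by (simp add: z1_def z2_def s1_def s2_def nmat_def mat1_mat3 dmat_def mat3_mult mat3_eq Pgrp_mat3 field_simps power2_eq_square)
    ultimately show "\<exists>p'\<in>Pgrp. z1 ** g = p' ** z1" by blast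
  next
    have "mat3 a 0 0 0 c 0 0 0 b \<in> Pgrp" using a nz by (simp add: z1_def z2_def s1_def s2_def nmat_def mat1_mat3 dmat_def mat3_mult mat3_eq Pgrp_mat3 field_simps power2_eq_square)
    moreover have "s2 ** (mat 1) ** g = (mat3 a 0 0 0 c 0 0 0 b) ** s2 ** (mat 1)" using a nz by (simp add: z1_def z2_def s1_def s2_def nmat_def mat1_mat3 dmat_def mat3_mult mat3_eq Pgrp_mat3 field_simps power2_eq_square)
    ultimately show "\<exists>p''\<in>Pgrp. s2 ** (mat 1) ** g = p'' ** s2 ** (mat 1)" by blast
  qed
qed

lemma stab_e: "stab (base z1 (mat 1) (mat 1)) = setmul Dgrp {nmat 0 0 x | x. True}"
  unfolding H3_eq 
proof (intro set_eqI iffI)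
  fix g assume "g \<in> stab (base z1 (mat 1) (mat 1))"
  then obtain p' p'' where h: "g \<in> Pgrp" "p' \<in> Pgrp" "p'' \<in> Pgrp" "z1 ** g = p' ** z1"
     "mat 1 ** (mat 1) ** g = p'' ** (mat 1) ** (mat 1)"
    unfolding stab_base by auto
  obtain a x y b z c where g: "g = mat3 a x y 0 b z 0 0 c" "a*b*c = 1" using h(1) by (rule PgrpE)
  obtain a1 x1 y1 b1 z1' c1 where p1: "p' = mat3 a1 x1 y1 0 b1 z1' 0 0 c1" using h(2) by (rule PgrpE)
  obtain a2 x2 y2 b2 z2' c2 where p2: "p'' = mat3 a2 x2 y2 0 b2 z2' 0 0 c2" using h(3) by (rule PgrpE)
  have "x = 0 \<and> y = 0" using h(4,5) unfolding g p1 p2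
    by (simp add: z1_def z2_def s1_def s2_def nmat_def mat1_mat3 mat3_mult mat3_eq)
  moreover have "a \<noteq> 0" "b \<noteq> 0" "c \<noteq> 0" using g by auto
  ultimately have "g = mat3 a 0 0 0 b z 0 0 c \<and> a*b*c = 1" using g by (auto simp: dmat_def mat3_eq field_simps power2_eq_square)
  then show "g \<in> {mat3 a 0 0 0 b z 0 0 c | a b c z. a*b*c = 1}" by blast
next
  fix g assume "g \<in> {mat3 a 0 0 0 b z 0 0 c | a b c z. a*b*c = 1}"
  then obtain a b c z where a: "a*b*c = 1" "g = mat3 a 0 0 0 b z 0 0 c" by auto
  have nz: "a \<noteq> 0" using a by auto
  show "g \<in> stab (base z1 (mat 1) (mat 1))" unfolding stab_base
  proof (intro CollectI conjI)
    show "g \<in> Pgrp" using a nz by (simp add: z1_def z2_def s1_def s2_def nmat_def mat1_mat3 dmat_def mat3_mult mat3_eq Pgrp_mat3 field_simps power2_eq_square)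
    have "mat3 b z 0 0 c 0 0 0 a \<in> Pgrp" using a nz by (simp add: z1_def z2_def s1_def s2_def nmat_def mat1_mat3 dmat_def mat3_mult mat3_eq Pgrp_mat3 field_simps power2_eq_square)
    moreover have "z1 ** g = (mat3 b z 0 0 c 0 0 0 a) ** z1" using a nz by (simp add: z1_def z2_def s1_def s2_def nmat_def mat1_mat3 dmat_def mat3_mult mat3_eq Pgrp_mat3 field_simps power2_eq_square)
    ultimately show "\<exists>p'\<in>Pgrp. z1 ** g = p' ** z1" by blast
  next
    have "mat3 a 0 0 0 b z 0 0 c \<in> Pgrp" using a nz by (simp add: z1_def z2_def s1_def s2_def nmat_def mat1_mat3 dmat_def mat3_mult mat3_eq Pgrp_mat3 field_simps power2_eq_square)
    moreover have "(mat 1) ** (mat 1) ** g = (mat3 a 0 0 0 b z 0 0 c) ** (mat 1) ** (mat 1)" using a nz by (simp add: z1_def z2_def s1_def s2_def nmat_def mat1_mat3 dmat_def mat3_mult mat3_eq Pgrp_mat3 field_simps power2_eq_square)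
    ultimately show "\<exists>p''\<in>Pgrp. (mat 1) ** (mat 1) ** g = p'' ** (mat 1) ** (mat 1)" by blast
  qed
qed



lemma lie_comp:
  assumes "X \<in> lie_alg H"
  shows "\<exists>\<gamma>. \<gamma> 0 = mat 1 \<and> (\<forall>t. \<gamma> t \<in> H) \<and> (\<forall>i j. ((\<lambda>t. \<gamma> t $ i $ j) has_real_derivative X $ i $ j) (at 0))"
proof -
  obtain \<gamma> where g: "\<gamma> 0 = mat 1" "\<forall>t. \<gamma> t \<in> H" "(\<gamma> has_vector_derivative X) (at 0)"
    using assms unfolding lie_alg_def by auto
  have "((\<lambda>t. \<gamma> t $ i $ j) has_real_derivative X $ i $ j) (at 0)" for i j
  proof -
    have bl: "bounded_linear (\<lambda>M::m3. M $ i $ j)"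
      using bounded_linear_compose[OF bounded_linear_vec_nth[of j] bounded_linear_vec_nth[of i]] by simp
    show ?thesis unfolding has_real_derivative_iff_has_vector_derivative
      using bounded_linear.has_vector_derivative[OF bl g(3)] by simp
  qed
  then show ?thesis using g by blast
qed

lemma lie_zero:
  assumes "X \<in> lie_alg H" "\<And>M. M \<in> H \<Longrightarrow> M $ i $ j = 0"
  shows "X $ i $ j = 0"
proof -
  obtain \<gamma> where g: "\<gamma> 0 = mat 1" "\<forall>t. \<gamma> t \<in> H" "\<forall>i j. ((\<lambda>t. \<gamma> t $ i $ j) has_real_derivative X $ i $ j) (at 0)"
    using lie_comp[OF assms(1)] by blast
  have "(\<lambda>t. \<gamma> t $ i $ j) = (\<lambda>t. 0)" using g(2) assms(2) by auto
  then have "((\<lambda>t. 0::real) has_real_derivative X $ i $ j) (at 0)" using g(3) by metis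
  then show ?thesis using DERIV_const DERIV_unique by blast
qed

lemma lie_eq:
  assumes "X \<in> lie_alg H" "\<And>M. M \<in> H \<Longrightarrow> M $ i $ j = M $ k $ l"
  shows "X $ i $ j = X $ k $ l"
proof -
  obtain \<gamma> where g: "\<gamma> 0 = mat 1" "\<forall>t. \<gamma> t \<in> H" "\<forall>i j. ((\<lambda>t. \<gamma> t $ i $ j) has_real_derivative X $ i $ j) (at 0)"
    using lie_comp[OF assms(1)] by blast
  have "(\<lambda>t. \<gamma> t $ i $ j) = (\<lambda>t. \<gamma> t $ k $ l)" using g(2) assms(2) by auto
  then have "((\<lambda>t. \<gamma> t $ k $ l) has_real_derivative X $ i $ j) (at 0)" using g(3) by metis
  then show ?thesis using g(3) DERIV_unique by blast
qed


lemma triple_deriv: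
  assumes "(f has_real_derivative D) (at x)" "(g has_real_derivative E) (at x)" "(h has_real_derivative F) (at x)"
  shows "((\<lambda>t. f t * g t * h t) has_real_derivative (D * g x * h x + f x * E * h x + f x * g x * F)) (at x)"
proof -
  have *: "(D * g x + E * f x) * h x + F * (f x * g x) = D * g x * h x + f x * E * h x + f x * g x * F"
    by (simp add: algebra_simps)
  show ?thesis
    using DERIV_mult[OF DERIV_mult[OF assms(1,2)] assms(3)] unfolding * .
qed

lemma lie_trace:
  assumes "X \<in> lie_alg H" "H \<subseteq> SL3"
  shows "X $ 1 $ 1 + X $ 2 $ 2 + X $ 3 $ 3 = 0"
proof -
  obtain \<gamma> where g: "\<gamma> 0 = mat 1" "\<forall>t. \<gamma> t \<in> H" and d: "\<And>i j. ((\<lambda>t. \<gamma> t $ i $ j) has_real_derivative X $ i $ j) (at 0)"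
    using lie_comp[OF assms(1)] by blast
  have g0: "\<gamma> 0 = mat3 1 0 0 0 1 0 0 0 1" using g(1) mat1_mat3 by simp
  note t1 = triple_deriv[OF d[of 1 1] d[of 2 2] d[of 3 3]]
  note t2 = triple_deriv[OF d[of 1 2] d[of 2 3] d[of 3 1]]
  note t3 = triple_deriv[OF d[of 1 3] d[of 2 1] d[of 3 2]]
  note t4 = triple_deriv[OF d[of 1 1] d[of 2 3] d[of 3 2]]
  note t5 = triple_deriv[OF d[of 1 2] d[of 2 1] d[of 3 3]]
  note t6 = triple_deriv[OF d[of 1 3] d[of 2 2] d[of 3 1]]
  note F = DERIV_diff[OF DERIV_diff[OF DERIV_diff[OF DERIV_add[OF DERIV_add[OF t1 t2] t3] t4] t5] t6]
  have D: "((\<lambda>t. det (\<gamma> t)) has_real_derivative X $ 1 $ 1 + X $ 2 $ 2 + X $ 3 $ 3) (at 0)"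
    using F by (simp add: det_3 g0 mat3_nth)
  have "(\<lambda>t. det (\<gamma> t)) = (\<lambda>t. 1)" using g(2) assms(2) by (auto simp: SL3_def)
  then have "((\<lambda>t. 1::real) has_real_derivative X $ 1 $ 1 + X $ 2 $ 2 + X $ 3 $ 3) (at 0)" using D by simp
  then show ?thesis using DERIV_const DERIV_unique by blast
qed

lemma mat3_vderiv:
  assumes "(f11 has_real_derivative d11) (at x)" "(f12 has_real_derivative d12) (at x)" "(f13 has_real_derivative d13) (at x)"
          "(f21 has_real_derivative d21) (at x)" "(f22 has_real_derivative d22) (at x)" "(f23 has_real_derivative d23) (at x)"
          "(f31 has_real_derivative d31) (at x)" "(f32 has_real_derivative d32) (at x)" "(f33 has_real_derivative d33) (at x)"
  shows "((\<lambda>t. mat3 (f11 t) (f12 t) (f13 t) (f21 t) (f22 t) (f23 t) (f31 t) (f32 t) (f33 t))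
           has_vector_derivative mat3 d11 d12 d13 d21 d22 d23 d31 d32 d33) (at x)"
proof -
  define E11 where "E11 = mat3 1 0 0 0 0 0 0 0 0"
  define E12 where "E12 = mat3 0 1 0 0 0 0 0 0 0"
  define E13 where "E13 = mat3 0 0 1 0 0 0 0 0 0"
  define E21 where "E21 = mat3 0 0 0 1 0 0 0 0 0"
  define E22 where "E22 = mat3 0 0 0 0 1 0 0 0 0"
  define E23 where "E23 = mat3 0 0 0 0 0 1 0 0 0"
  define E31 where "E31 = mat3 0 0 0 0 0 0 1 0 0"
  define E32 where "E32 = mat3 0 0 0 0 0 0 0 1 0"
  define E33 where "E33 = mat3 0 0 0 0 0 0 0 0 1"
  have e: "\<And>a11 a12 a13 a21 a22 a23 a31 a32 a33. mat3 a11 a12 a13 a21 a22 a23 a31 a32 a33 =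
     a11 *\<^sub>R E11 + a12 *\<^sub>R E12 + a13 *\<^sub>R E13 + a21 *\<^sub>R E21 + a22 *\<^sub>R E22 + a23 *\<^sub>R E23 +
     a31 *\<^sub>R E31 + a32 *\<^sub>R E32 + a33 *\<^sub>R E33"
    by (simp add: E11_def E12_def E13_def E21_def E22_def E23_def E31_def E32_def E33_def mat3_scale mat3_add)
  have sc: "\<And>f d C. (f has_real_derivative d) (at x) \<Longrightarrow> ((\<lambda>t. f t *\<^sub>R C) has_vector_derivative d *\<^sub>R C) (at x)"
    using has_vector_derivative_scaleR[OF _ has_vector_derivative_const] by fastforce
  have "((\<lambda>t. f11 t *\<^sub>R E11 + f12 t *\<^sub>R E12 + f13 t *\<^sub>R E13 + f21 t *\<^sub>R E21 + f22 t *\<^sub>R E22 + f23 t *\<^sub>R E23 +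
     f31 t *\<^sub>R E31 + f32 t *\<^sub>R E32 + f33 t *\<^sub>R E33) has_vector_derivative
     (d11 *\<^sub>R E11 + d12 *\<^sub>R E12 + d13 *\<^sub>R E13 + d21 *\<^sub>R E21 + d22 *\<^sub>R E22 + d23 *\<^sub>R E23 +
     d31 *\<^sub>R E31 + d32 *\<^sub>R E32 + d33 *\<^sub>R E33)) (at x)"
    by (intro has_vector_derivative_add sc assms)
  then show ?thesis by (simp only: e)
qed

lemma lie_memI:
  assumes "\<gamma> 0 = mat 1" "\<And>t. \<gamma> t \<in> H" "(\<gamma> has_vector_derivative X) (at 0)"
  shows "X \<in> lie_alg H"
  using assms unfolding lie_alg_def by blast

lemma dim_lemma:
  fixes f :: "'a::euclidean_space \<Rightarrow> m3"
  assumes "linear f" "inj f" "lie_alg H \<subseteq> range f" "range f \<subseteq> span (lie_alg H)"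
  shows "dim (lie_alg H) = DIM('a)"
proof -
  have sub: "subspace (range f)" using linear_subspace_image[OF assms(1) subspace_UNIV] .
  have "span (lie_alg H) = range f"
    using span_minimal[OF assms(3) sub] assms(4) by blast
  then have "dim (lie_alg H) = dim (range f)" by (metis dim_span)
  also have "\<dots> = dim (UNIV :: 'a set)"
    using dim_image_eq[OF assms(1)] assms(2) by (metis inj_on_subset subset_UNIV)
  finally show ?thesis by simp
qed


lemma d_exp: "((\<lambda>t. exp (c*t)) has_real_derivative c) (at 0)"
  by (auto intro!: derivative_eq_intros)

lemma d_const: "((\<lambda>t. k) has_real_derivative 0) (at x)"
  by (rule DERIV_const)

lemma d_id: "((\<lambda>t. t) has_real_derivative 1) (at x)"
  by (rule DERIV_ident)

lemma mat1_at0: "mat3 (exp (c1*0)) 0 0 0 (exp (c2*0)) 0 0 0 (exp (c3*0)) = mat 1"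
  by (simp add: mat1_mat3)

lemma diag_curve:
  assumes "\<And>t. mat3 (exp (p*t)) 0 0 0 (exp (q*t)) 0 0 0 (exp (r*t)) \<in> H"
  shows "mat3 p 0 0 0 q 0 0 0 r \<in> lie_alg H"
  apply (rule lie_memI[where \<gamma>="\<lambda>t. mat3 (exp (p*t)) 0 0 0 (exp (q*t)) 0 0 0 (exp (r*t))"])
    apply (simp add: mat1_mat3)
   apply (rule assms)
  using mat3_vderiv[OF d_exp d_const d_const d_const d_exp d_const d_const d_const d_exp] .

lemma exp_sum0: "p + q + r = (0::real) \<Longrightarrow> exp (p*t) * exp (q*t) * exp (r*(t::real)) = 1"
proof -
  assume "p + q + r = 0"
  moreover have "p*t + q*t + r*t = (p+q+r)*t" by (simp add: algebra_simps)
  ultimately have "p*t + q*t + r*t = 0" by simp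
  have "exp (p*t) * exp (q*t) * exp (r*t) = exp (p*t + q*t + r*t)" by (simp only: exp_add)
  then show ?thesis using \<open>p*t + q*t + r*t = 0\<close> by simp
qed

lemma diag_SL3: "p + q + r = 0 \<Longrightarrow> mat3 (exp (p*t)) 0 0 0 (exp (q*t)) 0 0 0 (exp (r*t)) \<in> SL3"
  by (simp add: SL3_def det_mat3 exp_sum0)

definition fSL :: "real \<times> real \<times> real \<times> real \<times> real \<times> real \<times> real \<times> real \<Rightarrow> m3" where
  "fSL = (\<lambda>(a,b,c,d,e,g,h,k). mat3 a b c d e g h k (-(a+e)))"

lemma lie_SL3: "lie_dim SL3 = 8"
proof -
  have lin: "linear fSL"
    unfolding linear_iff fSL_def by (simp add: split_paired_all split_paired_All mat3_add mat3_scale algebra_simps)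
  have inj: "inj fSL"
    unfolding inj_def fSL_def by (simp add: split_paired_all split_paired_All mat3_eq)
  have sub: "lie_alg SL3 \<subseteq> range fSL"
  proof
    fix X assume X: "X \<in> lie_alg SL3"
    have "X $ 3 $ 3 = -(X $ 1 $ 1 + X $ 2 $ 2)" using lie_trace[OF X] by simp
    then have "X = fSL (X$1$1, X$1$2, X$1$3, X$2$1, X$2$2, X$2$3, X$3$1, X$3$2)"
      unfolding fSL_def by (subst m3_eta) simp
    then show "X \<in> range fSL" by blast
  qed
  have u: "\<And>E. (\<And>t. mat 1 + t *\<^sub>R E \<in> SL3) \<Longrightarrow> E \<in> lie_alg SL3"
  proof -
    fix E :: m3 assume "\<And>t. mat 1 + t *\<^sub>R E \<in> SL3"
    moreover have "((\<lambda>t. mat 1 + t *\<^sub>R E) has_vector_derivative E) (at 0)"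
      by (auto intro!: derivative_eq_intros)
    ultimately show "E \<in> lie_alg SL3" by (intro lie_memI) auto
  qed
  have b1: "mat3 1 0 0 0 0 0 0 0 (-1) \<in> lie_alg SL3" by (rule diag_curve, rule diag_SL3) simp
  have b2: "mat3 0 0 0 0 1 0 0 0 (-1) \<in> lie_alg SL3" by (rule diag_curve, rule diag_SL3) simp
  have b3: "mat3 0 1 0 0 0 0 0 0 0 \<in> lie_alg SL3"
    by (rule u) (simp add: mat1_mat3 mat3_scale mat3_add SL3_def det_mat3)
  have b4: "mat3 0 0 1 0 0 0 0 0 0 \<in> lie_alg SL3"
    by (rule u) (simp add: mat1_mat3 mat3_scale mat3_add SL3_def det_mat3)
  have b5: "mat3 0 0 0 1 0 0 0 0 0 \<in> lie_alg SL3"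
    by (rule u) (simp add: mat1_mat3 mat3_scale mat3_add SL3_def det_mat3)
  have b6: "mat3 0 0 0 0 0 1 0 0 0 \<in> lie_alg SL3"
    by (rule u) (simp add: mat1_mat3 mat3_scale mat3_add SL3_def det_mat3)
  have b7: "mat3 0 0 0 0 0 0 1 0 0 \<in> lie_alg SL3"
    by (rule u) (simp add: mat1_mat3 mat3_scale mat3_add SL3_def det_mat3)
  have b8: "mat3 0 0 0 0 0 0 0 1 0 \<in> lie_alg SL3"
    by (rule u) (simp add: mat1_mat3 mat3_scale mat3_add SL3_def det_mat3)
  have sp: "range fSL \<subseteq> span (lie_alg SL3)"
  proof
    fix Y assume "Y \<in> range fSL"
    then obtain a b c d e g h k where Y: "Y = fSL (a,b,c,d,e,g,h,k)" by (metis surj_pair rangeE)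
    have "Y = a *\<^sub>R mat3 1 0 0 0 0 0 0 0 (-1) + e *\<^sub>R mat3 0 0 0 0 1 0 0 0 (-1) + b *\<^sub>R mat3 0 1 0 0 0 0 0 0 0
       + c *\<^sub>R mat3 0 0 1 0 0 0 0 0 0 + d *\<^sub>R mat3 0 0 0 1 0 0 0 0 0 + g *\<^sub>R mat3 0 0 0 0 0 1 0 0 0
       + h *\<^sub>R mat3 0 0 0 0 0 0 1 0 0 + k *\<^sub>R mat3 0 0 0 0 0 0 0 1 0"
      unfolding Y fSL_def by (simp add: mat3_scale mat3_add)
    then show "Y \<in> span (lie_alg SL3)"
      by (simp only:) (intro span_add span_mul span_base b1 b2 b3 b4 b5 b6 b7 b8)
  qed
  show ?thesis unfolding lie_dim_def using dim_lemma[OF lin inj sub sp] by simp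
qed


lemma unip_curve:
  assumes "\<And>t. mat 1 + t *\<^sub>R E \<in> H"
  shows "E \<in> lie_alg H"
proof -
  have "((\<lambda>t. mat 1 + t *\<^sub>R E) has_vector_derivative E) (at 0)"
    by (auto intro!: derivative_eq_intros)
  then show ?thesis using assms by (intro lie_memI) auto
qed

lemma exp_m2: "exp (-2*t) = 1 / (exp (1*(t::real)))^2"
proof -
  have "exp (-2*t) * exp (1*t) * exp (1*t) = 1" by (rule exp_sum0) simp
  then show ?thesis by (simp add: field_simps power2_eq_square)
qed


definition fA1 :: "real \<Rightarrow> m3" where
  "fA1 = (\<lambda>sa. mat3 sa 0 0 0 sa 0 0 0 (-2 * sa))"

lemma lie_A1: "lie_dim {dmat a a (1 / a^2) | a. a \<noteq> 0} = 1"
proof -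
  have HS: "{dmat a a (1 / a^2) | a. a \<noteq> 0} \<subseteq> SL3"
    by (auto simp: SL3_def det_mat3 dmat_def field_simps power2_eq_square)
  have lin: "linear fA1"
    unfolding linear_iff fA1_def by (simp add: split_paired_all split_paired_All mat3_add mat3_scale algebra_simps)
  have inj: "inj fA1"
    unfolding inj_def fA1_def by (simp add: split_paired_all split_paired_All mat3_eq)
  have sub: "lie_alg {dmat a a (1 / a^2) | a. a \<noteq> 0} \<subseteq> range fA1"
  proof
    fix X assume X: "X \<in> lie_alg {dmat a a (1 / a^2) | a. a \<noteq> 0}"
    have tr: "X $ 1 $ 1 + X $ 2 $ 2 + X $ 3 $ 3 = 0" using lie_trace[OF X HS] .
    have z0: "X $ 1 $ 2 = 0" by (rule lie_zero[OF X]) (auto simp: dmat_def mat3_nth)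
    have z1: "X $ 1 $ 3 = 0" by (rule lie_zero[OF X]) (auto simp: dmat_def mat3_nth)
    have z2: "X $ 2 $ 1 = 0" by (rule lie_zero[OF X]) (auto simp: dmat_def mat3_nth)
    have z3: "X $ 2 $ 3 = 0" by (rule lie_zero[OF X]) (auto simp: dmat_def mat3_nth)
    have z4: "X $ 3 $ 1 = 0" by (rule lie_zero[OF X]) (auto simp: dmat_def mat3_nth)
    have z5: "X $ 3 $ 2 = 0" by (rule lie_zero[OF X]) (auto simp: dmat_def mat3_nth)
    have e0: "X $ 1 $ 1 = X $ 2 $ 2" by (rule lie_eq[OF X]) (auto simp: dmat_def mat3_nth)
    have "X = fA1 (X$1$1)"
      unfolding fA1_def using tr z0 z1 z2 z3 z4 z5 e0 by (subst m3_eta) (simp add: mat3_eq)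
    then show "X \<in> range fA1" by blast
  qed
  have b0: "mat3 1 0 0 0 1 0 0 0 (-2) \<in> lie_alg {dmat a a (1 / a^2) | a. a \<noteq> 0}"
  proof -
    have "mat3 (1) 0 0 0 (1) 0 0 0 (-2) \<in> lie_alg {dmat a a (1 / a^2) | a. a \<noteq> 0}"
    proof (rule diag_curve)
      fix t :: real
      have se: "exp ((1) * t) * exp ((1) * t) * exp ((-2) * t) = 1" by (rule exp_sum0) simp
      show "mat3 (exp ((1) * t)) 0 0 0 (exp ((1) * t)) 0 0 0 (exp ((-2) * t)) \<in> {dmat a a (1 / a^2) | a. a \<noteq> 0}"
        using se exp_m2[of t] by (simp add: dmat_def mat3_eq) (auto simp: field_simps power2_eq_square)?
    qed
    then show ?thesis by simp
  qed
  have sp: "range fA1 \<subseteq> span (lie_alg {dmat a a (1 / a^2) | a. a \<noteq> 0})"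
  proof
    fix Y assume "Y \<in> range fA1"
    then obtain sa where Y: "Y = fA1 sa" by (metis surj_pair rangeE)
    have "Y = sa *\<^sub>R mat3 1 0 0 0 1 0 0 0 (-2)"
      unfolding Y fA1_def by (simp add: mat3_scale mat3_add mat3_eq)
    then show "Y \<in> span (lie_alg {dmat a a (1 / a^2) | a. a \<noteq> 0})"
      by (simp only:) (intro span_add span_mul span_base b0)
  qed
  show ?thesis unfolding lie_dim_def using dim_lemma[OF lin inj sub sp] by simp
qed


definition fA2 :: "real \<times> real \<Rightarrow> m3" where
  "fA2 = (\<lambda>(sa,ua). mat3 sa 0 0 0 (-2 * sa) ua 0 0 sa)"

lemma lie_A2: "lie_dim {mat3 a 0 0 0 (1 / a^2) x 0 0 a | a x. a \<noteq> 0} = 2"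
proof -
  have HS: "{mat3 a 0 0 0 (1 / a^2) x 0 0 a | a x. a \<noteq> 0} \<subseteq> SL3"
    by (auto simp: SL3_def det_mat3 dmat_def field_simps power2_eq_square)
  have lin: "linear fA2"
    unfolding linear_iff fA2_def by (simp add: split_paired_all split_paired_All mat3_add mat3_scale algebra_simps)
  have inj: "inj fA2"
    unfolding inj_def fA2_def by (simp add: split_paired_all split_paired_All mat3_eq)
  have sub: "lie_alg {mat3 a 0 0 0 (1 / a^2) x 0 0 a | a x. a \<noteq> 0} \<subseteq> range fA2"
  proof
    fix X assume X: "X \<in> lie_alg {mat3 a 0 0 0 (1 / a^2) x 0 0 a | a x. a \<noteq> 0}"
    have tr: "X $ 1 $ 1 + X $ 2 $ 2 + X $ 3 $ 3 = 0" using lie_trace[OF X HS] .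
    have z0: "X $ 1 $ 2 = 0" by (rule lie_zero[OF X]) (auto simp: dmat_def mat3_nth)
    have z1: "X $ 1 $ 3 = 0" by (rule lie_zero[OF X]) (auto simp: dmat_def mat3_nth)
    have z2: "X $ 2 $ 1 = 0" by (rule lie_zero[OF X]) (auto simp: dmat_def mat3_nth)
    have z3: "X $ 3 $ 1 = 0" by (rule lie_zero[OF X]) (auto simp: dmat_def mat3_nth)
    have z4: "X $ 3 $ 2 = 0" by (rule lie_zero[OF X]) (auto simp: dmat_def mat3_nth)
    have e0: "X $ 1 $ 1 = X $ 3 $ 3" by (rule lie_eq[OF X]) (auto simp: dmat_def mat3_nth)
    have "X = fA2 (X$1$1, X$2$3)"
      unfolding fA2_def using tr z0 z1 z2 z3 z4 e0 by (subst m3_eta) (simp add: mat3_eq)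
    then show "X \<in> range fA2" by blast
  qed
  have b0: "mat3 1 0 0 0 (-2) 0 0 0 1 \<in> lie_alg {mat3 a 0 0 0 (1 / a^2) x 0 0 a | a x. a \<noteq> 0}"
  proof -
    have "mat3 (1) 0 0 0 (-2) 0 0 0 (1) \<in> lie_alg {mat3 a 0 0 0 (1 / a^2) x 0 0 a | a x. a \<noteq> 0}"
    proof (rule diag_curve)
      fix t :: real
      have se: "exp ((1) * t) * exp ((-2) * t) * exp ((1) * t) = 1" by (rule exp_sum0) simp
      show "mat3 (exp ((1) * t)) 0 0 0 (exp ((-2) * t)) 0 0 0 (exp ((1) * t)) \<in> {mat3 a 0 0 0 (1 / a^2) x 0 0 a | a x. a \<noteq> 0}"
        using se exp_m2[of t] by (simp add: dmat_def mat3_eq) (auto simp: field_simps power2_eq_square)?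
    qed
    then show ?thesis by simp
  qed
  have b1: "mat3 0 0 0 0 0 1 0 0 0 \<in> lie_alg {mat3 a 0 0 0 (1 / a^2) x 0 0 a | a x. a \<noteq> 0}"
    by (rule unip_curve) (auto simp: mat1_mat3 mat3_scale mat3_add dmat_def mat3_eq)
  have sp: "range fA2 \<subseteq> span (lie_alg {mat3 a 0 0 0 (1 / a^2) x 0 0 a | a x. a \<noteq> 0})"
  proof
    fix Y assume "Y \<in> range fA2"
    then obtain sa ua where Y: "Y = fA2 (sa,ua)" by (metis surj_pair rangeE)
    have "Y = sa *\<^sub>R mat3 1 0 0 0 (-2) 0 0 0 1 + ua *\<^sub>R mat3 0 0 0 0 0 1 0 0 0"
      unfolding Y fA2_def by (simp add: mat3_scale mat3_add mat3_eq)
    then show "Y \<in> span (lie_alg {mat3 a 0 0 0 (1 / a^2) x 0 0 a | a x. a \<noteq> 0})"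
      by (simp only:) (intro span_add span_mul span_base b0 b1)
  qed
  show ?thesis unfolding lie_dim_def using dim_lemma[OF lin inj sub sp] by simp
qed


definition fA3 :: "real \<times> real \<times> real \<Rightarrow> m3" where
  "fA3 = (\<lambda>(sa,ua,va). mat3 sa 0 0 0 ua va 0 0 (-(sa+ua)))"

lemma lie_A3: "lie_dim {mat3 a 0 0 0 b z 0 0 c | a b c z. a*b*c = 1} = 3"
proof -
  have HS: "{mat3 a 0 0 0 b z 0 0 c | a b c z. a*b*c = 1} \<subseteq> SL3"
    by (auto simp: SL3_def det_mat3 dmat_def field_simps power2_eq_square)
  have lin: "linear fA3"
    unfolding linear_iff fA3_def by (simp add: split_paired_all split_paired_All mat3_add mat3_scale algebra_simps)
  have inj: "inj fA3"
    unfolding inj_def fA3_def by (simp add: split_paired_all split_paired_All mat3_eq)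
  have sub: "lie_alg {mat3 a 0 0 0 b z 0 0 c | a b c z. a*b*c = 1} \<subseteq> range fA3"
  proof
    fix X assume X: "X \<in> lie_alg {mat3 a 0 0 0 b z 0 0 c | a b c z. a*b*c = 1}"
    have tr: "X $ 1 $ 1 + X $ 2 $ 2 + X $ 3 $ 3 = 0" using lie_trace[OF X HS] .
    have z0: "X $ 1 $ 2 = 0" by (rule lie_zero[OF X]) (auto simp: dmat_def mat3_nth)
    have z1: "X $ 1 $ 3 = 0" by (rule lie_zero[OF X]) (auto simp: dmat_def mat3_nth)
    have z2: "X $ 2 $ 1 = 0" by (rule lie_zero[OF X]) (auto simp: dmat_def mat3_nth)
    have z3: "X $ 3 $ 1 = 0" by (rule lie_zero[OF X]) (auto simp: dmat_def mat3_nth)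
    have z4: "X $ 3 $ 2 = 0" by (rule lie_zero[OF X]) (auto simp: dmat_def mat3_nth)
    have "X = fA3 (X$1$1, X$2$2, X$2$3)"
      unfolding fA3_def using tr z0 z1 z2 z3 z4 by (subst m3_eta) (simp add: mat3_eq)
    then show "X \<in> range fA3" by blast
  qed
  have b0: "mat3 1 0 0 0 0 0 0 0 (-1) \<in> lie_alg {mat3 a 0 0 0 b z 0 0 c | a b c z. a*b*c = 1}"
  proof -
    have "mat3 (1) 0 0 0 (0) 0 0 0 (-1) \<in> lie_alg {mat3 a 0 0 0 b z 0 0 c | a b c z. a*b*c = 1}"
    proof (rule diag_curve)
      fix t :: real
      have se: "exp ((1) * t) * exp ((0) * t) * exp ((-1) * t) = 1" by (rule exp_sum0) simp
      show "mat3 (exp ((1) * t)) 0 0 0 (exp ((0) * t)) 0 0 0 (exp ((-1) * t)) \<in> {mat3 a 0 0 0 b z 0 0 c | a b c z. a*b*c = 1}"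
        using se exp_m2[of t] by (simp add: dmat_def mat3_eq) (auto simp: field_simps power2_eq_square)?
    qed
    then show ?thesis by simp
  qed
  have b1: "mat3 0 0 0 0 1 0 0 0 (-1) \<in> lie_alg {mat3 a 0 0 0 b z 0 0 c | a b c z. a*b*c = 1}"
  proof -
    have "mat3 (0) 0 0 0 (1) 0 0 0 (-1) \<in> lie_alg {mat3 a 0 0 0 b z 0 0 c | a b c z. a*b*c = 1}"
    proof (rule diag_curve)
      fix t :: real
      have se: "exp ((0) * t) * exp ((1) * t) * exp ((-1) * t) = 1" by (rule exp_sum0) simp
      show "mat3 (exp ((0) * t)) 0 0 0 (exp ((1) * t)) 0 0 0 (exp ((-1) * t)) \<in> {mat3 a 0 0 0 b z 0 0 c | a b c z. a*b*c = 1}"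
        using se exp_m2[of t] by (simp add: dmat_def mat3_eq) (auto simp: field_simps power2_eq_square)?
    qed
    then show ?thesis by simp
  qed
  have b2: "mat3 0 0 0 0 0 1 0 0 0 \<in> lie_alg {mat3 a 0 0 0 b z 0 0 c | a b c z. a*b*c = 1}"
    by (rule unip_curve) (auto simp: mat1_mat3 mat3_scale mat3_add dmat_def mat3_eq)
  have sp: "range fA3 \<subseteq> span (lie_alg {mat3 a 0 0 0 b z 0 0 c | a b c z. a*b*c = 1})"
  proof
    fix Y assume "Y \<in> range fA3"
    then obtain sa ua va where Y: "Y = fA3 (sa,ua,va)" by (metis surj_pair rangeE)
    have "Y = sa *\<^sub>R mat3 1 0 0 0 0 0 0 0 (-1) + ua *\<^sub>R mat3 0 0 0 0 1 0 0 0 (-1) + va *\<^sub>R mat3 0 0 0 0 0 1 0 0 0"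
      unfolding Y fA3_def by (simp add: mat3_scale mat3_add mat3_eq)
    then show "Y \<in> span (lie_alg {mat3 a 0 0 0 b z 0 0 c | a b c z. a*b*c = 1})"
      by (simp only:) (intro span_add span_mul span_base b0 b1 b2)
  qed
  show ?thesis unfolding lie_dim_def using dim_lemma[OF lin inj sub sp] by simp
qed


definition fB1 :: "real \<Rightarrow> m3" where
  "fB1 = (\<lambda>sa. mat3 sa 0 0 0 (-2 * sa) 0 0 0 sa)"

lemma lie_B1: "lie_dim {dmat a (1 / a^2) a | a. a \<noteq> 0} = 1"
proof -
  have HS: "{dmat a (1 / a^2) a | a. a \<noteq> 0} \<subseteq> SL3"
    by (auto simp: SL3_def det_mat3 dmat_def field_simps power2_eq_square)
  have lin: "linear fB1"
    unfolding linear_iff fB1_def by (simp add: split_paired_all split_paired_All mat3_add mat3_scale algebra_simps)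
  have inj: "inj fB1"
    unfolding inj_def fB1_def by (simp add: split_paired_all split_paired_All mat3_eq)
  have sub: "lie_alg {dmat a (1 / a^2) a | a. a \<noteq> 0} \<subseteq> range fB1"
  proof
    fix X assume X: "X \<in> lie_alg {dmat a (1 / a^2) a | a. a \<noteq> 0}"
    have tr: "X $ 1 $ 1 + X $ 2 $ 2 + X $ 3 $ 3 = 0" using lie_trace[OF X HS] .
    have z0: "X $ 1 $ 2 = 0" by (rule lie_zero[OF X]) (auto simp: dmat_def mat3_nth)
    have z1: "X $ 1 $ 3 = 0" by (rule lie_zero[OF X]) (auto simp: dmat_def mat3_nth)
    have z2: "X $ 2 $ 1 = 0" by (rule lie_zero[OF X]) (auto simp: dmat_def mat3_nth)
    have z3: "X $ 2 $ 3 = 0" by (rule lie_zero[OF X]) (auto simp: dmat_def mat3_nth)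
    have z4: "X $ 3 $ 1 = 0" by (rule lie_zero[OF X]) (auto simp: dmat_def mat3_nth)
    have z5: "X $ 3 $ 2 = 0" by (rule lie_zero[OF X]) (auto simp: dmat_def mat3_nth)
    have e0: "X $ 1 $ 1 = X $ 3 $ 3" by (rule lie_eq[OF X]) (auto simp: dmat_def mat3_nth)
    have "X = fB1 (X$1$1)"
      unfolding fB1_def using tr z0 z1 z2 z3 z4 z5 e0 by (subst m3_eta) (simp add: mat3_eq)
    then show "X \<in> range fB1" by blast
  qed
  have b0: "mat3 1 0 0 0 (-2) 0 0 0 1 \<in> lie_alg {dmat a (1 / a^2) a | a. a \<noteq> 0}"
  proof -
    have "mat3 (1) 0 0 0 (-2) 0 0 0 (1) \<in> lie_alg {dmat a (1 / a^2) a | a. a \<noteq> 0}"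
    proof (rule diag_curve)
      fix t :: real
      have se: "exp ((1) * t) * exp ((-2) * t) * exp ((1) * t) = 1" by (rule exp_sum0) simp
      show "mat3 (exp ((1) * t)) 0 0 0 (exp ((-2) * t)) 0 0 0 (exp ((1) * t)) \<in> {dmat a (1 / a^2) a | a. a \<noteq> 0}"
        using se exp_m2[of t] by (simp add: dmat_def mat3_eq) (auto simp: field_simps power2_eq_square)?
    qed
    then show ?thesis by simp
  qed
  have sp: "range fB1 \<subseteq> span (lie_alg {dmat a (1 / a^2) a | a. a \<noteq> 0})"
  proof
    fix Y assume "Y \<in> range fB1"
    then obtain sa where Y: "Y = fB1 sa" by (metis surj_pair rangeE)
    have "Y = sa *\<^sub>R mat3 1 0 0 0 (-2) 0 0 0 1"
      unfolding Y fB1_def by (simp add: mat3_scale mat3_add mat3_eq)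
    then show "Y \<in> span (lie_alg {dmat a (1 / a^2) a | a. a \<noteq> 0})"
      by (simp only:) (intro span_add span_mul span_base b0)
  qed
  show ?thesis unfolding lie_dim_def using dim_lemma[OF lin inj sub sp] by simp
qed


definition fB2 :: "real \<times> real \<Rightarrow> m3" where
  "fB2 = (\<lambda>(sa,ua). mat3 sa 0 0 0 ua 0 0 0 (-(sa+ua)))"

lemma lie_B2: "lie_dim {mat3 a 0 0 0 b 0 0 0 c | a b c. a*b*c = 1} = 2"
proof -
  have HS: "{mat3 a 0 0 0 b 0 0 0 c | a b c. a*b*c = 1} \<subseteq> SL3"
    by (auto simp: SL3_def det_mat3 dmat_def field_simps power2_eq_square)
  have lin: "linear fB2"
    unfolding linear_iff fB2_def by (simp add: split_paired_all split_paired_All mat3_add mat3_scale algebra_simps)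
  have inj: "inj fB2"
    unfolding inj_def fB2_def by (simp add: split_paired_all split_paired_All mat3_eq)
  have sub: "lie_alg {mat3 a 0 0 0 b 0 0 0 c | a b c. a*b*c = 1} \<subseteq> range fB2"
  proof
    fix X assume X: "X \<in> lie_alg {mat3 a 0 0 0 b 0 0 0 c | a b c. a*b*c = 1}"
    have tr: "X $ 1 $ 1 + X $ 2 $ 2 + X $ 3 $ 3 = 0" using lie_trace[OF X HS] .
    have z0: "X $ 1 $ 2 = 0" by (rule lie_zero[OF X]) (auto simp: dmat_def mat3_nth)
    have z1: "X $ 1 $ 3 = 0" by (rule lie_zero[OF X]) (auto simp: dmat_def mat3_nth)
    have z2: "X $ 2 $ 1 = 0" by (rule lie_zero[OF X]) (auto simp: dmat_def mat3_nth)
    have z3: "X $ 2 $ 3 = 0" by (rule lie_zero[OF X]) (auto simp: dmat_def mat3_nth)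
    have z4: "X $ 3 $ 1 = 0" by (rule lie_zero[OF X]) (auto simp: dmat_def mat3_nth)
    have z5: "X $ 3 $ 2 = 0" by (rule lie_zero[OF X]) (auto simp: dmat_def mat3_nth)
    have "X = fB2 (X$1$1, X$2$2)"
      unfolding fB2_def using tr z0 z1 z2 z3 z4 z5 by (subst m3_eta) (simp add: mat3_eq)
    then show "X \<in> range fB2" by blast
  qed
  have b0: "mat3 1 0 0 0 0 0 0 0 (-1) \<in> lie_alg {mat3 a 0 0 0 b 0 0 0 c | a b c. a*b*c = 1}"
  proof -
    have "mat3 (1) 0 0 0 (0) 0 0 0 (-1) \<in> lie_alg {mat3 a 0 0 0 b 0 0 0 c | a b c. a*b*c = 1}"
    proof (rule diag_curve)
      fix t :: real
      have se: "exp ((1) * t) * exp ((0) * t) * exp ((-1) * t) = 1" by (rule exp_sum0) simp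
      show "mat3 (exp ((1) * t)) 0 0 0 (exp ((0) * t)) 0 0 0 (exp ((-1) * t)) \<in> {mat3 a 0 0 0 b 0 0 0 c | a b c. a*b*c = 1}"
        using se exp_m2[of t] by (simp add: dmat_def mat3_eq) (auto simp: field_simps power2_eq_square)?
    qed
    then show ?thesis by simp
  qed
  have b1: "mat3 0 0 0 0 1 0 0 0 (-1) \<in> lie_alg {mat3 a 0 0 0 b 0 0 0 c | a b c. a*b*c = 1}"
  proof -
    have "mat3 (0) 0 0 0 (1) 0 0 0 (-1) \<in> lie_alg {mat3 a 0 0 0 b 0 0 0 c | a b c. a*b*c = 1}"
    proof (rule diag_curve)
      fix t :: real
      have se: "exp ((0) * t) * exp ((1) * t) * exp ((-1) * t) = 1" by (rule exp_sum0) simp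
      show "mat3 (exp ((0) * t)) 0 0 0 (exp ((1) * t)) 0 0 0 (exp ((-1) * t)) \<in> {mat3 a 0 0 0 b 0 0 0 c | a b c. a*b*c = 1}"
        using se exp_m2[of t] by (simp add: dmat_def mat3_eq) (auto simp: field_simps power2_eq_square)?
    qed
    then show ?thesis by simp
  qed
  have sp: "range fB2 \<subseteq> span (lie_alg {mat3 a 0 0 0 b 0 0 0 c | a b c. a*b*c = 1})"
  proof
    fix Y assume "Y \<in> range fB2"
    then obtain sa ua where Y: "Y = fB2 (sa,ua)" by (metis surj_pair rangeE)
    have "Y = sa *\<^sub>R mat3 1 0 0 0 0 0 0 0 (-1) + ua *\<^sub>R mat3 0 0 0 0 1 0 0 0 (-1)"
      unfolding Y fB2_def by (simp add: mat3_scale mat3_add mat3_eq)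
    then show "Y \<in> span (lie_alg {mat3 a 0 0 0 b 0 0 0 c | a b c. a*b*c = 1})"
      by (simp only:) (intro span_add span_mul span_base b0 b1)
  qed
  show ?thesis unfolding lie_dim_def using dim_lemma[OF lin inj sub sp] by simp
qed


definition fC1 :: "real \<times> real \<Rightarrow> m3" where
  "fC1 = (\<lambda>(sa,ua). mat3 sa 0 0 0 sa ua 0 0 (-2 * sa))"

lemma lie_C1: "lie_dim {mat3 a 0 0 0 a x 0 0 (1 / a^2) | a x. a \<noteq> 0} = 2"
proof -
  have HS: "{mat3 a 0 0 0 a x 0 0 (1 / a^2) | a x. a \<noteq> 0} \<subseteq> SL3"
    by (auto simp: SL3_def det_mat3 dmat_def field_simps power2_eq_square)
  have lin: "linear fC1"
    unfolding linear_iff fC1_def by (simp add: split_paired_all split_paired_All mat3_add mat3_scale algebra_simps)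
  have inj: "inj fC1"
    unfolding inj_def fC1_def by (simp add: split_paired_all split_paired_All mat3_eq)
  have sub: "lie_alg {mat3 a 0 0 0 a x 0 0 (1 / a^2) | a x. a \<noteq> 0} \<subseteq> range fC1"
  proof
    fix X assume X: "X \<in> lie_alg {mat3 a 0 0 0 a x 0 0 (1 / a^2) | a x. a \<noteq> 0}"
    have tr: "X $ 1 $ 1 + X $ 2 $ 2 + X $ 3 $ 3 = 0" using lie_trace[OF X HS] .
    have z0: "X $ 1 $ 2 = 0" by (rule lie_zero[OF X]) (auto simp: dmat_def mat3_nth)
    have z1: "X $ 1 $ 3 = 0" by (rule lie_zero[OF X]) (auto simp: dmat_def mat3_nth)
    have z2: "X $ 2 $ 1 = 0" by (rule lie_zero[OF X]) (auto simp: dmat_def mat3_nth)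
    have z3: "X $ 3 $ 1 = 0" by (rule lie_zero[OF X]) (auto simp: dmat_def mat3_nth)
    have z4: "X $ 3 $ 2 = 0" by (rule lie_zero[OF X]) (auto simp: dmat_def mat3_nth)
    have e0: "X $ 1 $ 1 = X $ 2 $ 2" by (rule lie_eq[OF X]) (auto simp: dmat_def mat3_nth)
    have "X = fC1 (X$1$1, X$2$3)"
      unfolding fC1_def using tr z0 z1 z2 z3 z4 e0 by (subst m3_eta) (simp add: mat3_eq)
    then show "X \<in> range fC1" by blast
  qed
  have b0: "mat3 1 0 0 0 1 0 0 0 (-2) \<in> lie_alg {mat3 a 0 0 0 a x 0 0 (1 / a^2) | a x. a \<noteq> 0}"
  proof -
    have "mat3 (1) 0 0 0 (1) 0 0 0 (-2) \<in> lie_alg {mat3 a 0 0 0 a x 0 0 (1 / a^2) | a x. a \<noteq> 0}"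
    proof (rule diag_curve)
      fix t :: real
      have se: "exp ((1) * t) * exp ((1) * t) * exp ((-2) * t) = 1" by (rule exp_sum0) simp
      show "mat3 (exp ((1) * t)) 0 0 0 (exp ((1) * t)) 0 0 0 (exp ((-2) * t)) \<in> {mat3 a 0 0 0 a x 0 0 (1 / a^2) | a x. a \<noteq> 0}"
        using se exp_m2[of t] by (simp add: dmat_def mat3_eq) (auto simp: field_simps power2_eq_square)?
    qed
    then show ?thesis by simp
  qed
  have b1: "mat3 0 0 0 0 0 1 0 0 0 \<in> lie_alg {mat3 a 0 0 0 a x 0 0 (1 / a^2) | a x. a \<noteq> 0}"
    by (rule unip_curve) (auto simp: mat1_mat3 mat3_scale mat3_add dmat_def mat3_eq)
  have sp: "range fC1 \<subseteq> span (lie_alg {mat3 a 0 0 0 a x 0 0 (1 / a^2) | a x. a \<noteq> 0})"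
  proof
    fix Y assume "Y \<in> range fC1"
    then obtain sa ua where Y: "Y = fC1 (sa,ua)" by (metis surj_pair rangeE)
    have "Y = sa *\<^sub>R mat3 1 0 0 0 1 0 0 0 (-2) + ua *\<^sub>R mat3 0 0 0 0 0 1 0 0 0"
      unfolding Y fC1_def by (simp add: mat3_scale mat3_add mat3_eq)
    then show "Y \<in> span (lie_alg {mat3 a 0 0 0 a x 0 0 (1 / a^2) | a x. a \<noteq> 0})"
      by (simp only:) (intro span_add span_mul span_base b0 b1)
  qed
  show ?thesis unfolding lie_dim_def using dim_lemma[OF lin inj sub sp] by simp
qed


theorem mainTheorem9:
  shows
  "(let x1 = base z1 z1 (nmat 1 0 0); x2 = base z1 z1 (nmat 0 1 0); x3 = base z1 z1 (nmat 0 0 0) in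
      cell z1 z1 = orbit x1 \<union> orbit x2 \<union> orbit x3
    \<and> orbit x1 \<inter> orbit x2 = {} \<and> orbit x1 \<inter> orbit x3 = {} \<and> orbit x2 \<inter> orbit x3 = {}
    \<and> orbit_dim x1 = 7 \<and> stab x1 = {dmat a a (1 / a^2) | a. a \<noteq> 0}
    \<and> orbit_dim x2 = 6 \<and> stab x2 = {mat3 a 0 0 0 (1 / a^2) x 0 0 a | a x. a \<noteq> 0}
    \<and> orbit_dim x3 = 5 \<and> stab x3 = setmul Dgrp {nmat 0 0 x | x. True})
 \<and> (let x1 = base z1 z2 (nmat 0 1 0); x2 = base z1 z2 (nmat 0 0 0) in
      cell z1 z2 = orbit x1 \<union> orbit x2 \<and> orbit x1 \<inter> orbit x2 = {}
    \<and> orbit_dim x1 = 7 \<and> stab x1 = {dmat a (1 / a^2) a | a. a \<noteq> 0}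
    \<and> orbit_dim x2 = 6 \<and> stab x2 = Dgrp)
 \<and> (let x1 = base z1 s1 (nmat 1 0 0); x2 = base z1 s1 (nmat 0 0 0) in
      cell z1 s1 = orbit x1 \<union> orbit x2 \<and> orbit x1 \<inter> orbit x2 = {}
    \<and> orbit_dim x1 = 6 \<and> stab x1 = {mat3 a 0 0 0 a x 0 0 (1 / a^2) | a x. a \<noteq> 0}
    \<and> orbit_dim x2 = 5 \<and> stab x2 = setmul Dgrp {nmat 0 0 x | x. True})
 \<and> (let x1 = base z1 s2 (mat 1) in
      cell z1 s2 = orbit x1 \<and> orbit_dim x1 = 6 \<and> stab x1 = Dgrp)
 \<and> (let x1 = base z1 (mat 1) (mat 1) in
      cell z1 (mat 1) = orbit x1 \<and> orbit_dim x1 = 5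
    \<and> stab x1 = setmul Dgrp {nmat 0 0 x | x. True})"
  proof -
  have ca: "cell z1 z1 = (\<Union>n\<in>{nmat 1 0 0, nmat 0 1 0, nmat 0 0 0}. orbit (base z1 z1 n))"
    by (rule cell_union[OF core_a]) (simp_all add: nmat_P)
  have cb: "cell z1 z2 = (\<Union>n\<in>{nmat 0 1 0, nmat 0 0 0}. orbit (base z1 z2 n))"
    by (rule cell_union[OF core_b]) (simp_all add: nmat_P)
  have cc: "cell z1 s1 = (\<Union>n\<in>{nmat 1 0 0, nmat 0 0 0}. orbit (base z1 s1 n))"
    by (rule cell_union[OF core_c]) (simp_all add: nmat_P)
  have cd: "cell z1 s2 = (\<Union>n\<in>{mat 1}. orbit (base z1 s2 n))"
    by (rule cell_union[OF core_d]) (simp_all add: P_one)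
  have ce: "cell z1 (mat 1) = (\<Union>n\<in>{mat 1}. orbit (base z1 (mat 1) n))"
    by (rule cell_union[OF core_e]) (simp_all add: P_one)
  note dj = orbit_disj[OF disj_a12] orbit_disj[OF disj_a13] orbit_disj[OF disj_a23]
    orbit_disj[OF disj_b] orbit_disj[OF disj_c]
  have sl: "lie_dim SL3 = 8" by (rule lie_SL3)
  note st = stab_a1 stab_a2 stab_a3 stab_b1 stab_b2 stab_c1 stab_c2 stab_d stab_e
  note lie = lie_A1 lie_A2 lie_A3 lie_B1 lie_B2 lie_C1
  have H3: "lie_dim (setmul Dgrp {nmat 0 0 x | x. True}) = 3" unfolding H3_eq by (rule lie_A3)
  have D2: "lie_dim Dgrp = 2" unfolding Dgrp_eq by (rule lie_B2)
  have o1: "orbit_dim (base z1 z1 (nmat 1 0 0)) = 7" unfolding orbit_dim_def stab_a1 lie_A1 sl by simp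
  have o2: "orbit_dim (base z1 z1 (nmat 0 1 0)) = 6" unfolding orbit_dim_def stab_a2 lie_A2 sl by simp
  have o3: "orbit_dim (base z1 z1 (nmat 0 0 0)) = 5" unfolding orbit_dim_def stab_a3 H3 sl by simp
  have o4: "orbit_dim (base z1 z2 (nmat 0 1 0)) = 7" unfolding orbit_dim_def stab_b1 lie_B1 sl by simp
  have o5: "orbit_dim (base z1 z2 (nmat 0 0 0)) = 6" unfolding orbit_dim_def stab_b2 D2 sl by simp
  have o6: "orbit_dim (base z1 s1 (nmat 1 0 0)) = 6" unfolding orbit_dim_def stab_c1 lie_C1 sl by simp
  have o7: "orbit_dim (base z1 s1 (nmat 0 0 0)) = 5" unfolding orbit_dim_def stab_c2 H3 sl by simp
  have o8: "orbit_dim (base z1 s2 (mat 1)) = 6" unfolding orbit_dim_def stab_d D2 sl by simp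
  have o9: "orbit_dim (base z1 (mat 1) (mat 1)) = 5" unfolding orbit_dim_def stab_e H3 sl by simp
  show ?thesis
    unfolding Let_def
    using ca cb cc cd ce dj st o1 o2 o3 o4 o5 o6 o7 o8 o9
    by (simp add: Un_assoc)
qed

end
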